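(* The following hold. (1) If $\mathbf v_0,\mathbf v_1\in\Lambda_q$ and $\mathbf v_0\neq\pm\mathbf v_1$, then $|\mathbf v_0\wedge\mathbf v_1|\ge1$. (2) Let $\mathbf v\in\mathbb R^2\setminus\{0\}$ be not parallel to any vector of $\Lambda_q$, and let $\mathbf u_0,\mathbf u_1\in\Lambda_q$ with $\mathbf u_0\wedge\mathbf u_1=1$ and $\mathbf v\in\{\alpha\mathbf u_0+\beta\mathbf u_1:\alpha,\beta>0\}$. Then there exist grandchildren $\mathbf w_0,\mathbf w_1$ of $\mathbf u_0,\mathbf u_1$ with $\mathbf w_0\wedge\mathbf w_1=1$, $\{\mathbf w_0,\mathbf w_1\}\neq\{\mathbf u_0,\mathbf u_1\}$, and $\mathbf v\in\{\alpha\mathbf w_0+\beta\mathbf w_1:\alpha,\beta>0\}$. (3) Let $\mathbf u_0,\mathbf u_1\in\Lambda_q$ with $\mathbf u_0\wedge\mathbf u_1=1$, and let $(\mathbf w_n)_{n\ge1}$ be any sequence such that for each $n$, $\mathbf w_n$ is generated at stage $n$ of the $G_q$-Stern–Brocot process started from $(\mathbf u_0,\mathbf u_1)$. Then $\|\mathbf w_n\|\to\infty$. (4) The set of slopes $y/x$ of vectors $(x,y)^T\in\Lambda_q$ with $x\neq0$ is dense in $\mathbb R$.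
   Context: Fix an integer $q\ge3$, let $\lambda_q=2\cos(\pi/q)$, and let $G_q\subset \mathrm{SL}(2,\mathbb R)$ be the Hecke triangle group generated by $S=\begin{pmatrix}0&-1\\1&0\end{pmatrix}$ and $T_q=\begin{pmatrix}1&\lambda_q\\0&1\end{pmatrix}$, acting linearly on $\mathbb R^2$. Set $\Lambda_q=G_q(1,0)^T$. Let $U_q=T_qS$ and $(x_j^q,y_j^q)^T=U_q^j(1,0)^T$. Wedge product: $(x_0,y_0)^T\wedge(x_1,y_1)^T=x_0y_1-x_1y_0$. The $G_q$-Stern–Brocot process started from a pair $\mathbf u_0,\mathbf u_1\in\Lambda_q$ with $\mathbf u_0\wedge\mathbf u_1=1$: set $L_0=(\mathbf u_0,\mathbf u_1)$ and obtain $L_{n+1}$ from the list $L_n$ by replacing each consecutive pair $(\mathbf v,\mathbf w)$ with $x_j^q\mathbf v+y_j^q\mathbf w$, $j=0,\dots,q-1$. A vector is generated at stage $n\ge1$ if it appears in $L_n$ but not in $L_{n-1}$; grandchildren of $\mathbf u_0,\mathbf u_1$ are the vectors generated at some stage $n\ge1$. *)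

theory Defs
  imports "HOL-Analysis.Analysis"
begin

definition lam :: "nat \<Rightarrow> real" where
  "lam q = 2 * cos (pi / real q)"

definition Smat :: "real^2^2" where
  "Smat = vector [vector [0, -1], vector [1, 0]]"

definition Tmat :: "nat \<Rightarrow> real^2^2" where
  "Tmat q = vector [vector [1, lam q], vector [0, 1]]"

definition Sinv :: "real^2^2" where
  "Sinv = vector [vector [0, 1], vector [-1, 0]]"

definition Tinv :: "nat \<Rightarrow> real^2^2" where
  "Tinv q = vector [vector [1, - lam q], vector [0, 1]]"

inductive_set hecke_group :: "nat \<Rightarrow> (real^2^2) set" for q where
  id: "mat 1 \<in> hecke_group q"
| S: "A \<in> hecke_group q \<Longrightarrow> Smat ** A \<in> hecke_group q"
| T: "A \<in> hecke_group q \<Longrightarrow> Tmat q ** A \<in> hecke_group q"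
| Si: "A \<in> hecke_group q \<Longrightarrow> Sinv ** A \<in> hecke_group q"
| Ti: "A \<in> hecke_group q \<Longrightarrow> Tinv q ** A \<in> hecke_group q"

definition e1 :: "real^2" where
  "e1 = vector [1, 0]"

definition Lambda :: "nat \<Rightarrow> (real^2) set" where
  "Lambda q = {A *v e1 | A. A \<in> hecke_group q}"

definition wedge :: "real^2 \<Rightarrow> real^2 \<Rightarrow> real" where
  "wedge v w = v$1 * w$2 - w$1 * v$2"

definition Umat :: "nat \<Rightarrow> real^2^2" where
  "Umat q = Tmat q ** Smat"

fun Upow :: "nat \<Rightarrow> nat \<Rightarrow> real^2^2" where
  "Upow q 0 = mat 1"
| "Upow q (Suc j) = Umat q ** Upow q j"

definition xq :: "nat \<Rightarrow> nat \<Rightarrow> real" where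
  "xq q j = (Upow q j *v e1) $ 1"

definition yq :: "nat \<Rightarrow> nat \<Rightarrow> real" where
  "yq q j = (Upow q j *v e1) $ 2"

text \<open>One refinement step: each consecutive pair (v,w) is replaced by
  x_j v + y_j w, j = 0..q-1.  Since (x_0,y_0) = (1,0) and (x_{q-1},y_{q-1}) = (0,1),
  the blocks of consecutive pairs share their endpoints; the shared endpoint
  is kept once (the j = q-1 term of one block is the j = 0 term of the next).\<close>
fun sb_step :: "nat \<Rightarrow> (real^2) list \<Rightarrow> (real^2) list" where
  "sb_step q [] = []"
| "sb_step q [v] = [v]"
| "sb_step q (v # w # rest) =
     map (\<lambda>j. xq q j *\<^sub>R v + yq q j *\<^sub>R w) [0..<q - 1] @ sb_step q (w # rest)"

fun sb_list :: "nat \<Rightarrow> real^2 \<Rightarrow> real^2 \<Rightarrow> nat \<Rightarrow> (real^2) list" where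
  "sb_list q u0 u1 0 = [u0, u1]"
| "sb_list q u0 u1 (Suc n) = sb_step q (sb_list q u0 u1 n)"

definition generated_at :: "nat \<Rightarrow> real^2 \<Rightarrow> real^2 \<Rightarrow> nat \<Rightarrow> real^2 \<Rightarrow> bool" where
  "generated_at q u0 u1 n v \<longleftrightarrow>
     1 \<le> n \<and> v \<in> set (sb_list q u0 u1 n) \<and> v \<notin> set (sb_list q u0 u1 (n - 1))"

definition grandchild :: "nat \<Rightarrow> real^2 \<Rightarrow> real^2 \<Rightarrow> real^2 \<Rightarrow> bool" where
  "grandchild q u0 u1 v \<longleftrightarrow> (\<exists>n\<ge>1. generated_at q u0 u1 n v)"

definition open_cone :: "real^2 \<Rightarrow> real^2 \<Rightarrow> (real^2) set" where
  "open_cone u0 u1 = {\<alpha> *\<^sub>R u0 + \<beta> *\<^sub>R u1 | \<alpha> \<beta>. \<alpha> > 0 \<and> \<beta> > 0}"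

end

theory Submission
  imports Defs
begin


lemma vec2_eq: "(u::real^2) = v \<longleftrightarrow> u$1 = v$1 \<and> u$2 = v$2"
  by (simp add: vec_eq_iff forall_2)

lemma mv2: "(A::real^2^2) *v x = vector [A$1$1*x$1 + A$1$2*x$2, A$2$1*x$1 + A$2$2*x$2]"
  by (simp add: vec_eq_iff forall_2 matrix_vector_mult_def sum_2)

lemma mm2: "(A::real^2^2) ** (B::real^2^2) = vector [vector [A$1$1*B$1$1 + A$1$2*B$2$1, A$1$1*B$1$2 + A$1$2*B$2$2],
   vector [A$2$1*B$1$1 + A$2$2*B$2$1, A$2$1*B$1$2 + A$2$2*B$2$2]]"
  by (simp add: vec_eq_iff forall_2 matrix_matrix_mult_def sum_2)

lemma S_mv: "Smat *v x = vector [- x$2, x$1]"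
  by (simp add: mv2 Smat_def)
lemma T_mv: "Tmat q *v x = vector [x$1 + lam q * x$2, x$2]"
  by (simp add: mv2 Tmat_def)
lemma Si_mv: "Sinv *v x = vector [x$2, - x$1]"
  by (simp add: mv2 Sinv_def)
lemma Ti_mv: "Tinv q *v x = vector [x$1 - lam q * x$2, x$2]"
  by (simp add: mv2 Tinv_def)
lemma U_mv: "Umat q *v x = vector [lam q * x$1 - x$2, x$1]"
  by (simp add: Umat_def matrix_vector_mul_assoc[symmetric] S_mv T_mv)

definition sn :: "nat \<Rightarrow> nat \<Rightarrow> real" where
  "sn q k = sin (real k * (pi / real q)) / sin (pi / real q)"

definition P :: "nat \<Rightarrow> nat \<Rightarrow> real^2" where
  "P q j = Upow q j *v e1"

lemma P_Suc: "P q (Suc j) = Umat q *v P q j"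
  by (simp add: P_def matrix_vector_mul_assoc)

lemma sn_rec: "sn q (Suc (Suc k)) = lam q * sn q (Suc k) - sn q k"
proof -
  define t where "t = pi / real q"
  define a where "a = real (Suc k) * t"
  have 1: "real (Suc (Suc k)) * t = a + t" by (simp add: a_def algebra_simps)
  have 2: "real k * t = a - t" by (simp add: a_def algebra_simps)
  have "sin (a + t) = 2 * cos t * sin a - sin (a - t)"
    by (simp add: sin_add sin_diff algebra_simps)
  then show ?thesis unfolding sn_def lam_def t_def[symmetric] 1 2 a_def[symmetric]
    by (simp add: diff_divide_distrib)
qed

lemma P_closed: "q \<ge> 2 \<Longrightarrow> P q j = vector [sn q (Suc j), sn q j]"
proof (induction j)
  case 0
  have "sin (pi / real q) \<noteq> 0"
  proof -
    have "0 < pi / real q" using 0 by simp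
    moreover have "pi / real q < pi" using 0 by (simp add: divide_less_eq)
    ultimately show ?thesis using sin_gt_zero by force
  qed
  then show ?case by (simp add: P_def e1_def sn_def)
next
  case (Suc j)
  then show ?case
    by (simp add: P_Suc U_mv sn_rec[symmetric])
qed


context fixes q :: nat assumes q3: "3 \<le> q" begin

lemma theta_pos: "0 < pi / real q" using q3 by simp
lemma theta_lt: "pi / real q < pi" using q3 by (simp add: divide_less_eq)
lemma sin_theta_pos: "0 < sin (pi / real q)" using theta_pos theta_lt sin_gt_zero by blast

lemma sn_ge1: assumes "1 \<le> k" "k \<le> q - 1" shows "1 \<le> sn q k"
proof -
  define t where "t = pi / real q"
  have t0: "0 < t" using theta_pos t_def by simp
  have kq: "real k * t \<le> pi - t"
  proof -
    have "real k \<le> real q - 1" using assms q3 by linarith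
    then have "real k * t \<le> (real q - 1) * t" using t0 by (simp add: mult_right_mono)
    also have "\<dots> = pi - t" using q3 by (simp add: t_def field_simps)
    finally show ?thesis .
  qed
  have kt: "t \<le> real k * t" using assms t0 by simp
  have "sin t \<le> sin (real k * t)"
  proof (cases "real k * t \<le> pi / 2")
    case True
    have "t \<le> pi/2" using kt True by linarith
    then show ?thesis using sin_monotone_2pi_le[of t "real k * t"] True kt t0 by linarith
  next
    case False
    have "sin (real k * t) = sin (pi - real k * t)" by simp
    moreover have "sin t \<le> sin (pi - real k * t)"
      using sin_monotone_2pi_le[of t "pi - real k * t"] False kq t0 by linarith
    ultimately show ?thesis by simp
  qed
  then show ?thesis unfolding sn_def t_def[symmetric] using sin_theta_pos t_def by simp
qed

lemma sn_ge0: assumes "k \<le> q" shows "0 \<le> sn q k"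
proof -
  have "real k * (pi / real q) \<le> pi" using assms q3 by (simp add: field_simps)
  then have "0 \<le> sin (real k * (pi / real q))" by (intro sin_ge_zero) auto
  then show ?thesis unfolding sn_def using sin_theta_pos by simp
qed

lemma sn_0: "sn q 0 = 0" by (simp add: sn_def)
lemma sn_q: "sn q q = 0" using q3 by (simp add: sn_def)
lemma sn_qm1: "sn q (q - 1) = 1"
proof -
  have "real (q - 1) * (pi / real q) = pi - pi / real q" using q3 by (simp add: of_nat_diff field_simps)
  then show ?thesis unfolding sn_def using sin_theta_pos by simp
qed

lemma lam_lt2: "lam q < 2"
proof -
  have "cos (pi / real q) < 1"
    using cos_monotone_0_pi[of 0 "pi / real q"] theta_pos theta_lt
    by (metis cos_zero less_eq_real_def)
  then show ?thesis by (simp add: lam_def)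
qed

lemma lam_pos: "0 < lam q"
proof -
  have "pi / real q < pi / 2" using q3 pi_gt_zero by (simp add: field_simps)
  then have "0 < cos (pi / real q)" using theta_pos by (intro cos_gt_zero_pi) auto
  then show ?thesis by (simp add: lam_def)
qed

end


lemma xq0: "xq q 0 = 1" and yq0: "yq q 0 = 0"
  by (simp_all add: xq_def yq_def e1_def)

lemma sb_ne: "l \<noteq> [] \<Longrightarrow> sb_step q l \<noteq> []"
  by (induction q l rule: sb_step.induct) auto

lemma sb_last: "l \<noteq> [] \<Longrightarrow> last (sb_step q l) = last l"
  by (induction q l rule: sb_step.induct) (auto simp: sb_ne)

lemma sb_hd: "2 \<le> q \<Longrightarrow> l \<noteq> [] \<Longrightarrow> hd (sb_step q l) = hd l"
proof (induction q l rule: sb_step.induct)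
  case (3 q v w rest)
  have "[0..<q-1] = 0 # [1..<q-1]" using 3 by (simp add: upt_rec)
  then show ?case by (simp add: xq0 yq0)
qed auto

lemma sb_mono: "2 \<le> q \<Longrightarrow> set l \<subseteq> set (sb_step q l)"
proof (induction q l rule: sb_step.induct)
  case (3 q v w rest)
  have "[0..<q-1] = 0 # [1..<q-1]" using 3 by (simp add: upt_rec)
  then have "v \<in> set (sb_step q (v # w # rest))" by (simp add: xq0 yq0)
  then show ?case using 3 by auto
qed auto

lemma sb_split1: "sb_step q (xs @ v # ys) = butlast (sb_step q (xs @ [v])) @ sb_step q (v # ys)"
proof (induction xs rule: induct_list012)
  case 1 then show ?case by simp
next
  case (2 x) then show ?case by simp
next
  case (3 x y zs)
  have ne: "sb_step q (y # zs @ [v]) \<noteq> []" by (simp add: sb_ne)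
  show ?case using 3(2) ne by (simp add: butlast_append)
qed

lemma sbn_ne: "l \<noteq> [] \<Longrightarrow> (sb_step q ^^ n) l \<noteq> []"
  by (induction n) (auto simp: sb_ne)
lemma sbn_last: "l \<noteq> [] \<Longrightarrow> last ((sb_step q ^^ n) l) = last l"
  by (induction n) (auto simp: sb_last sbn_ne)
lemma sbn_hd: "2 \<le> q \<Longrightarrow> l \<noteq> [] \<Longrightarrow> hd ((sb_step q ^^ n) l) = hd l"
  by (induction n) (auto simp: sb_hd sbn_ne)
lemma sbn_mono: "2 \<le> q \<Longrightarrow> set l \<subseteq> set ((sb_step q ^^ n) l)"
  by (induction n) (use sb_mono in auto)

lemma sbn_split: assumes q2: "2 \<le> q"
  shows "(sb_step q ^^ n) (xs @ v # ys) = butlast ((sb_step q ^^ n) (xs @ [v])) @ (sb_step q ^^ n) (v # ys)"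
proof (induction n)
  case 0 then show ?case by simp
next
  case (Suc n)
  define X where "X = (sb_step q ^^ n) (xs @ [v])"
  define Y where "Y = (sb_step q ^^ n) (v # ys)"
  have Xne: "X \<noteq> []" unfolding X_def by (simp add: sbn_ne)
  have Xl: "last X = v" unfolding X_def by (simp add: sbn_last)
  have Yne: "Y \<noteq> []" unfolding Y_def by (simp add: sbn_ne)
  have Yh: "hd Y = v" unfolding Y_def using q2 by (simp add: sbn_hd)
  have X: "X = butlast X @ [v]" using Xne Xl by (metis append_butlast_last_id)
  have Y: "Y = v # tl Y" using Yne Yh by (metis list.collapse)
  have "(sb_step q ^^ Suc n) (xs @ v # ys) = sb_step q (butlast X @ Y)"
    using Suc by (simp add: X_def Y_def)
  also have "\<dots> = sb_step q (butlast X @ v # tl Y)" using Y by metis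
  also have "\<dots> = butlast (sb_step q (butlast X @ [v])) @ sb_step q (v # tl Y)"
    by (rule sb_split1)
  also have "\<dots> = butlast (sb_step q X) @ sb_step q Y" using X Y by metis
  finally show ?case by (simp add: X_def Y_def)
qed

lemma sbn_split_set: assumes q2: "2 \<le> q"
  shows "set ((sb_step q ^^ n) (xs @ v # ys)) = set ((sb_step q ^^ n) (xs @ [v])) \<union> set ((sb_step q ^^ n) (v # ys))"
proof -
  define X where "X = (sb_step q ^^ n) (xs @ [v])"
  define Y where "Y = (sb_step q ^^ n) (v # ys)"
  have Xne: "X \<noteq> []" unfolding X_def by (simp add: sbn_ne)
  have Xl: "last X = v" unfolding X_def by (simp add: sbn_last)
  have Yne: "Y \<noteq> []" unfolding Y_def by (simp add: sbn_ne)
  have Yh: "hd Y = v" unfolding Y_def using q2 by (simp add: sbn_hd)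
  have X: "set X = set (butlast X) \<union> {v}" using Xne Xl
    by (metis append_butlast_last_id set_append empty_set list.simps(15) Un_insert_right)
  have vY: "v \<in> set Y" using Yne Yh by (metis list.set_sel(1))
  show ?thesis using sbn_split[OF q2, of n xs v ys] X vY unfolding X_def[symmetric] Y_def[symmetric]
    by auto
qed

lemma sb_list_funpow: "sb_list q v w n = (sb_step q ^^ n) [v, w]"
  by (induction n) auto

lemma sb_linear:
  assumes lin: "\<And>a b x y. f (a *\<^sub>R x + b *\<^sub>R y) = a *\<^sub>R f x + b *\<^sub>R f y"
  shows "map f (sb_step q l) = sb_step q (map f l)"
  by (induction q l rule: sb_step.induct) (auto simp: lin)

lemma sbn_linear:
  assumes lin: "\<And>a b x y. f (a *\<^sub>R x + b *\<^sub>R y) = a *\<^sub>R f x + b *\<^sub>R f y"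
  shows "map f ((sb_step q ^^ n) l) = (sb_step q ^^ n) (map f l)"
  by (induction n) (auto simp: sb_linear[OF lin])


definition e2 :: "real^2" where "e2 = vector [0, 1]"
definition comb :: "real^2 \<Rightarrow> real^2 \<Rightarrow> real^2 \<Rightarrow> real^2" where
  "comb p r z = z$1 *\<^sub>R p + z$2 *\<^sub>R r"
definition Rn :: "nat \<Rightarrow> nat \<Rightarrow> (real^2) set" where
  "Rn q n = set (sb_list q e1 e2 n)"
definition good :: "real^2 \<Rightarrow> bool" where
  "good z \<longleftrightarrow> z = e1 \<or> z = e2 \<or> (1 \<le> z$1 \<and> 1 \<le> z$2)"

lemma e1_c[simp]: "e1$1 = 1" "e1$2 = 0" by (simp_all add: e1_def)
lemma e2_c[simp]: "e2$1 = 0" "e2$2 = 1" by (simp_all add: e2_def)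
lemma e12_ne[simp]: "e1 \<noteq> e2" "e2 \<noteq> e1" by (simp_all add: vec2_eq)

lemma comb_c[simp]: "comb p r z $1 = z$1 * p$1 + z$2 * r$1" "comb p r z $2 = z$1 * p$2 + z$2 * r$2"
  by (simp_all add: comb_def)

lemma comb_lin: "comb p r (a *\<^sub>R x + b *\<^sub>R y) = a *\<^sub>R comb p r x + b *\<^sub>R comb p r y"
  by (simp add: vec2_eq algebra_simps)
lemma comb_e1[simp]: "comb p r e1 = p" by (simp add: vec2_eq)
lemma comb_e2[simp]: "comb p r e2 = r" by (simp add: vec2_eq)
lemma comb_comb: "comb p r (comb p' r' z) = comb (comb p r p') (comb p r r') z"
  by (simp add: vec2_eq algebra_simps)

lemma sb_list_comb: "sb_list q p r n = map (comb p r) (sb_list q e1 e2 n)"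
proof -
  have "map (comb p r) ((sb_step q ^^ n) [e1,e2]) = (sb_step q ^^ n) (map (comb p r) [e1,e2])"
    by (rule sbn_linear) (rule comb_lin)
  then show ?thesis unfolding sb_list_funpow by simp
qed

lemma set_sb_list: "set (sb_list q p r n) = comb p r ` Rn q n"
  by (subst sb_list_comb) (simp add: Rn_def)

lemma wedge_comb: "wedge (comb p r a) (comb p r b) = wedge p r * wedge a b"
  by (simp add: wedge_def algebra_simps)

lemma wedge_U: "wedge (Umat q *v a) (Umat q *v b) = wedge a b"
  by (simp add: wedge_def U_mv algebra_simps)

lemma P0: "P q 0 = e1" by (simp add: P_def)

lemma wedge_P: "wedge (P q i) (P q (i + d)) = (P q d)$2"
proof (induction i)
  case 0 then show ?case by (simp add: P0 wedge_def)
next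
  case (Suc i)
  have "wedge (P q (Suc i)) (P q (Suc i + d)) = wedge (Umat q *v P q i) (Umat q *v P q (i + d))"
    by (simp add: P_Suc)
  then show ?case using Suc by (simp add: wedge_U)
qed

context fixes q :: nat assumes q3: "3 \<le> q" begin

lemma q2: "2 \<le> q" using q3 by simp

lemma Pc: "P q j $1 = sn q (Suc j)" "P q j $2 = sn q j"
  using P_closed[OF q2] by simp_all

lemma Pqm1: "P q (q - 1) = e2"
  using q3 sn_qm1[OF q3] sn_q[OF q3] by (simp add: vec2_eq Pc)

lemma P_bounds: assumes "j < q - 1"
  shows "1 \<le> P q j $1" "0 \<le> P q j $2" "0 \<le> P q (Suc j) $1" "1 \<le> P q (Suc j) $2"
    "0 < j \<Longrightarrow> 1 \<le> P q j $2" "Suc j < q - 1 \<Longrightarrow> 1 \<le> P q (Suc j) $1"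
  using assms by (auto simp: Pc intro!: sn_ge1[OF q3] sn_ge0[OF q3])

lemma wedge_P2: "i \<le> l \<Longrightarrow> wedge (P q i) (P q l) = sn q (l - i)"
  using wedge_P[of q i "l - i"] by (simp add: Pc)

lemma stage1: "sb_step q [e1, e2] = map (P q) [0..<q]"
proof -
  have "\<And>j. xq q j *\<^sub>R e1 + yq q j *\<^sub>R e2 = P q j"
    by (simp add: vec2_eq xq_def yq_def P_def)
  then have "sb_step q [e1, e2] = map (P q) [0..<q-1] @ [P q (q - 1)]"
    using Pqm1 by simp
  also have "\<dots> = map (P q) [0..<q]"
  proof -
    obtain m where m: "q = Suc m" using q3 by (cases q) auto
    show ?thesis by (simp add: m)
  qed
  finally show ?thesis .
qed

lemma decomp: "set ((sb_step q ^^ n) (map (P q) [0..<Suc (Suc k)]))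
   = (\<Union>j\<in>{..k}. set ((sb_step q ^^ n) [P q j, P q (Suc j)]))"
proof (induction k)
  case 0 then show ?case by simp
next
  case (Suc k)
  have L: "map (P q) [0..<Suc (Suc (Suc k))] = map (P q) [0..<Suc k] @ P q (Suc k) # [P q (Suc (Suc k))]"
    by simp
  have L2: "map (P q) [0..<Suc k] @ [P q (Suc k)] = map (P q) [0..<Suc (Suc k)]" by simp
  have "set ((sb_step q ^^ n) (map (P q) [0..<Suc (Suc (Suc k))])) =
     set ((sb_step q ^^ n) (map (P q) [0..<Suc k] @ [P q (Suc k)])) \<union> set ((sb_step q ^^ n) [P q (Suc k), P q (Suc (Suc k))])"
    unfolding L by (rule sbn_split_set[OF q2])
  also have "\<dots> = (\<Union>j\<in>{..k}. set ((sb_step q ^^ n) [P q j, P q (Suc j)])) \<union> set ((sb_step q ^^ n) [P q (Suc k), P q (Suc (Suc k))])"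
    unfolding L2 Suc.IH ..
  also have "\<dots> = (\<Union>j\<in>{..Suc k}. set ((sb_step q ^^ n) [P q j, P q (Suc j)]))"
    unfolding atMost_Suc by blast
  finally show ?case .
qed

lemma Rn_Suc: "Rn q (Suc n) = (\<Union>j\<in>{..<q-1}. comb (P q j) (P q (Suc j)) ` Rn q n)"
proof -
  have qq: "Suc (Suc (q - 2)) = q" using q3 by simp
  have "Rn q (Suc n) = set ((sb_step q ^^ n) (sb_step q [e1, e2]))"
    unfolding Rn_def sb_list_funpow funpow_Suc_right o_apply ..
  also have "\<dots> = set ((sb_step q ^^ n) (map (P q) [0..<Suc (Suc (q - 2))]))"
    unfolding stage1 qq ..
  also have "\<dots> = (\<Union>j\<in>{..q-2}. set ((sb_step q ^^ n) [P q j, P q (Suc j)]))" by (rule decomp)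
  also have "\<dots> = (\<Union>j\<in>{..q-2}. comb (P q j) (P q (Suc j)) ` Rn q n)"
    by (simp only: set_sb_list[symmetric] sb_list_funpow)
  also have "{..q-2} = {..<q-1}" using q3 by auto
  finally show ?thesis .
qed

lemma Rn_0: "Rn q 0 = {e1, e2}" by (simp add: Rn_def)

lemma Rn_mono1: "Rn q n \<subseteq> Rn q (Suc n)"
  unfolding Rn_def sb_list.simps using sb_mono[OF q2] by blast

lemma Rn_mono: "m \<le> n \<Longrightarrow> Rn q m \<subseteq> Rn q n"
  using lift_Suc_mono_le[of "Rn q", OF Rn_mono1] by blast

end


lemma wedge_expand: "wedge (comb p r a) (comb p' r' b) =
   a$1*b$1*wedge p p' + a$1*b$2*wedge p r' + a$2*b$1*wedge r p' + a$2*b$2*wedge r r'"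
  by (simp add: wedge_def algebra_simps)

lemma good_props: "good z \<Longrightarrow> 0 \<le> z$1 \<and> 0 \<le> z$2 \<and> 1 \<le> z$1 + z$2"
  unfolding good_def by auto

lemma ge1_mult: "(1::real) \<le> a \<Longrightarrow> 1 \<le> b \<Longrightarrow> 1 \<le> a * b"
  by (metis less_eq_real_def mult.right_neutral mult_mono zero_less_one order.trans)

context fixes q :: nat assumes q3: "3 \<le> q" begin

lemma piece_good: assumes j: "j < q - 1" and g: "good a"
  shows "good (comb (P q j) (P q (Suc j)) a)"
proof -
  note B = P_bounds[OF q3 j]
  consider "a = e1" | "a = e2" | "1 \<le> a$1" "1 \<le> a$2" using g good_def by auto
  then show ?thesis
  proof cases
    case 1
    show ?thesis
    proof (cases "j = 0")
      case True then show ?thesis using 1 by (simp add: P0 good_def)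
    next
      case False then show ?thesis using 1 B by (simp add: good_def)
    qed
  next
    case 2
    show ?thesis
    proof (cases "Suc j = q - 1")
      case True then show ?thesis using 2 Pqm1[OF q3] by (simp add: good_def)
    next
      case False then have "Suc j < q - 1" using j by simp
      then show ?thesis using 2 B by (simp add: good_def)
    qed
  next
    case 3
    have "1 \<le> a$1 * P q j $1" using 3 B ge1_mult by blast
    moreover have "0 \<le> a$2 * P q (Suc j) $1" using 3 B by simp
    moreover have "1 \<le> a$2 * P q (Suc j) $2" using 3 B ge1_mult by blast
    moreover have "0 \<le> a$1 * P q j $2" using 3 B by simp
    ultimately show ?thesis by (simp add: good_def)
  qed
qed

lemma Rn_good: "z \<in> Rn q n \<Longrightarrow> good z"
proof (induction n arbitrary: z)
  case 0 then show ?case by (auto simp: Rn_0[OF q3] good_def)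
next
  case (Suc n)
  then obtain j z' where "j < q - 1" "z' \<in> Rn q n" "z = comb (P q j) (P q (Suc j)) z'"
    by (auto simp: Rn_Suc[OF q3])
  then show ?case using Suc.IH piece_good by blast
qed

lemma cross: assumes jk: "j < k" "k < q - 1" and ga: "good a" and gb: "good b"
  and ne: "comb (P q j) (P q (Suc j)) a \<noteq> comb (P q k) (P q (Suc k)) b"
  shows "1 \<le> wedge (comb (P q j) (P q (Suc j)) a) (comb (P q k) (P q (Suc k)) b)"
proof -
  define w1 where "w1 = wedge (P q j) (P q k)"
  define w2 where "w2 = wedge (P q j) (P q (Suc k))"
  define w3 where "w3 = wedge (P q (Suc j)) (P q k)"
  define w4 where "w4 = wedge (P q (Suc j)) (P q (Suc k))"
  have w1: "1 \<le> w1" unfolding w1_def using jk by (simp add: wedge_P2[OF q3] sn_ge1[OF q3])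
  have w2: "1 \<le> w2" unfolding w2_def using jk by (simp add: wedge_P2[OF q3] sn_ge1[OF q3])
  have w3: "0 \<le> w3" unfolding w3_def using jk by (simp add: wedge_P2[OF q3] sn_ge0[OF q3])
  have w4: "1 \<le> w4" unfolding w4_def using jk by (simp add: wedge_P2[OF q3] sn_ge1[OF q3])
  have E: "wedge (comb (P q j) (P q (Suc j)) a) (comb (P q k) (P q (Suc k)) b) =
      a$1*b$1*w1 + a$1*b$2*w2 + a$2*b$1*w3 + a$2*b$2*w4"
    unfolding wedge_expand w1_def w2_def w3_def w4_def ..
  have pa: "0 \<le> a$1" "0 \<le> a$2" and pb: "0 \<le> b$1" "0 \<le> b$2" "1 \<le> b$1 + b$2"
    using good_props[OF ga] good_props[OF gb] by auto
  have t3: "0 \<le> a$2*b$1*w3" using pa pb w3 by simp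
  have t4: "0 \<le> a$2*b$2*w4" using pa pb w4 by simp
  show ?thesis
  proof (cases "1 \<le> a$1")
    case True
    have "b$1 \<le> a$1*b$1*w1"
    proof -
      have "1 \<le> a$1*w1" using True w1 ge1_mult by blast
      then have "b$1 * 1 \<le> b$1 * (a$1*w1)" using pb by (intro mult_left_mono) auto
      then show ?thesis by (simp add: algebra_simps)
    qed
    moreover have "b$2 \<le> a$1*b$2*w2"
    proof -
      have "1 \<le> a$1*w2" using True w2 ge1_mult by blast
      then have "b$2 * 1 \<le> b$2 * (a$1*w2)" using pb by (intro mult_left_mono) auto
      then show ?thesis by (simp add: algebra_simps)
    qed
    ultimately show ?thesis using E t3 t4 pb by linarith
  next
    case False
    then have a: "a = e2" using ga unfolding good_def by auto
    have t1: "0 \<le> a$1*b$1*w1" using pa pb w1 by simp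
    have t2: "0 \<le> a$1*b$2*w2" using pa pb w2 by simp
    show ?thesis
    proof (cases "1 \<le> b$2")
      case True
      have "1 \<le> a$2*b$2*w4" using a True w4 ge1_mult by simp
      then show ?thesis using E t1 t2 t3 by linarith
    next
      case False
      then have b: "b = e1" using gb unfolding good_def by auto
      have "k \<noteq> Suc j" using ne a b by auto
      then have "1 \<le> w3" unfolding w3_def using jk by (simp add: wedge_P2[OF q3] sn_ge1[OF q3])
      then show ?thesis using E a b by simp
    qed
  qed
qed

lemma wedge_anti: "wedge a b = - wedge b a" by (simp add: wedge_def)

lemma Rn_W: "z \<in> Rn q n \<Longrightarrow> z' \<in> Rn q n \<Longrightarrow> z \<noteq> z' \<Longrightarrow> 1 \<le> \<bar>wedge z z'\<bar>"
proof (induction n arbitrary: z z')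
  case 0 then show ?case by (auto simp: Rn_0[OF q3] wedge_def)
next
  case (Suc n)
  obtain j a where j: "j < q - 1" "a \<in> Rn q n" "z = comb (P q j) (P q (Suc j)) a"
    using Suc.prems by (auto simp: Rn_Suc[OF q3])
  obtain k b where k: "k < q - 1" "b \<in> Rn q n" "z' = comb (P q k) (P q (Suc k)) b"
    using Suc.prems by (auto simp: Rn_Suc[OF q3])
  have ga: "good a" "good b" using j k Rn_good by auto
  consider "j = k" | "j < k" | "k < j" by linarith
  then show ?case
  proof cases
    case 1
    have "wedge (P q j) (P q (Suc j)) = 1"
      using wedge_P2[OF q3, of j "Suc j"] sin_theta_pos[OF q3] by (simp add: sn_def)
    then have "wedge z z' = wedge a b" using j k 1 by (simp add: wedge_comb)
    moreover have "a \<noteq> b" using j k 1 Suc.prems by auto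
    ultimately show ?thesis using Suc.IH j k by simp
  next
    case 2 then show ?thesis using cross[of j k a b] j k ga Suc.prems by fastforce
  next
    case 3 then show ?thesis using cross[of k j b a] j k ga Suc.prems wedge_anti[of z z'] by fastforce
  qed
qed

lemma piece_ss: assumes j: "j < q - 1" and a: "1 \<le> a$1" "1 \<le> a$2"
  shows "a$1 + a$2 + 1 \<le> comb (P q j) (P q (Suc j)) a $1 + comb (P q j) (P q (Suc j)) a $2"
proof -
  note B = P_bounds[OF q3 j]
  have e: "comb (P q j) (P q (Suc j)) a $1 + comb (P q j) (P q (Suc j)) a $2
     = a$1 * (P q j $1 + P q j $2) + a$2 * (P q (Suc j) $1 + P q (Suc j) $2)"
    by (simp add: algebra_simps)
  show ?thesis
  proof (cases "j = 0")
    case True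
    have "Suc j < q - 1" using True q3 by simp
    then have c2: "2 \<le> P q (Suc j) $1 + P q (Suc j) $2" using B by simp
    have c1: "1 \<le> P q j $1 + P q j $2" using B by simp
    have "a$1 * 1 \<le> a$1 * (P q j $1 + P q j $2)" using c1 a by (intro mult_left_mono) auto
    moreover have "a$2 * 2 \<le> a$2 * (P q (Suc j) $1 + P q (Suc j) $2)" using c2 a by (intro mult_left_mono) auto
    ultimately show ?thesis using e a by linarith
  next
    case False
    then have c1: "2 \<le> P q j $1 + P q j $2" using B by simp
    have c2: "1 \<le> P q (Suc j) $1 + P q (Suc j) $2" using B by simp
    have "a$1 * 2 \<le> a$1 * (P q j $1 + P q j $2)" using c1 a by (intro mult_left_mono) auto
    moreover have "a$2 * 1 \<le> a$2 * (P q (Suc j) $1 + P q (Suc j) $2)" using c2 a by (intro mult_left_mono) auto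
    ultimately show ?thesis using e a by linarith
  qed
qed

lemma piece_ss2: assumes j: "j < q - 1" and a: "1 \<le> A" "1 \<le> B"
  shows "A + B + 1 \<le> (P q j $1 + P q (Suc j) $1) * A + (P q j $2 + P q (Suc j) $2) * B"
proof -
  note Bd = P_bounds[OF q3 j]
  show ?thesis
  proof (cases "Suc j < q - 1")
    case True
    then have c1: "2 \<le> P q j $1 + P q (Suc j) $1" using Bd by simp
    have c2: "1 \<le> P q j $2 + P q (Suc j) $2" using Bd by simp
    have "2 * A \<le> (P q j $1 + P q (Suc j) $1) * A" using c1 a by (intro mult_right_mono) auto
    moreover have "1 * B \<le> (P q j $2 + P q (Suc j) $2) * B" using c2 a by (intro mult_right_mono) auto
    ultimately show ?thesis using a by linarith
  next
    case False
    then have "0 < j" using q3 j by simp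
    then have c2: "2 \<le> P q j $2 + P q (Suc j) $2" using Bd by simp
    have c1: "1 \<le> P q j $1 + P q (Suc j) $1" using Bd by simp
    have "1 * A \<le> (P q j $1 + P q (Suc j) $1) * A" using c1 a by (intro mult_right_mono) auto
    moreover have "2 * B \<le> (P q j $2 + P q (Suc j) $2) * B" using c2 a by (intro mult_right_mono) auto
    ultimately show ?thesis using a by linarith
  qed
qed

lemma e12_Rn: "e1 \<in> Rn q n" "e2 \<in> Rn q n"
  using Rn_mono[OF q3, of 0 n] by (auto simp: Rn_0[OF q3])

lemma growth: "z \<in> Rn q (Suc n) \<Longrightarrow> z \<notin> Rn q n \<Longrightarrow> real n + 2 \<le> z$1 + z$2"
proof (induction n arbitrary: z)
  case 0
  have "good z" using 0 Rn_good by blast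
  moreover have "z \<noteq> e1" "z \<noteq> e2" using 0 by (auto simp: Rn_0[OF q3])
  ultimately show ?case unfolding good_def by auto
next
  case (Suc n)
  obtain j a where j: "j < q - 1" "a \<in> Rn q (Suc n)" "z = comb (P q j) (P q (Suc j)) a"
    using Suc.prems by (auto simp: Rn_Suc[OF q3, of "Suc n"])
  have an: "a \<notin> Rn q n"
  proof
    assume "a \<in> Rn q n"
    then have "z \<in> Rn q (Suc n)" using j by (auto simp: Rn_Suc[OF q3, of n])
    then show False using Suc.prems by simp
  qed
  have IH: "real n + 2 \<le> a$1 + a$2" using Suc.IH j(2) an by blast
  have "a \<noteq> e1" "a \<noteq> e2" using an e12_Rn by auto
  then have "1 \<le> a$1" "1 \<le> a$2" using Rn_good[OF j(2)] good_def by auto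
  then show ?case using piece_ss[OF j(1)] IH j(3) by force
qed

end


lemma mat2_eq: "(A::real^2^2) = B \<longleftrightarrow> A$1$1 = B$1$1 \<and> A$1$2 = B$1$2 \<and> A$2$1 = B$2$1 \<and> A$2$2 = B$2$2"
  by (simp add: vec_eq_iff forall_2)

lemma mm_c: "((A::real^2^2) ** B) $ i $ j = A$i$1 * B$1$j + A$i$2 * B$2$j"
  by (simp add: matrix_matrix_mult_def sum_2)

lemma mat1_c: "(mat 1 :: real^2^2) $1$1 = 1" "(mat 1 :: real^2^2) $1$2 = 0"
  "(mat 1 :: real^2^2) $2$1 = 0" "(mat 1 :: real^2^2) $2$2 = 1"
  by (simp_all add: mat_def)

lemma gen_c:
  "Smat$1$1 = 0" "Smat$1$2 = -1" "Smat$2$1 = 1" "Smat$2$2 = 0"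
  "Sinv$1$1 = 0" "Sinv$1$2 = 1" "Sinv$2$1 = -1" "Sinv$2$2 = 0"
  "Tmat q$1$1 = 1" "Tmat q$1$2 = lam q" "Tmat q$2$1 = 0" "Tmat q$2$2 = 1"
  "Tinv q$1$1 = 1" "Tinv q$1$2 = - lam q" "Tinv q$2$1 = 0" "Tinv q$2$2 = 1"
  by (simp_all add: Smat_def Sinv_def Tmat_def Tinv_def)

lemma SSi: "Sinv ** Smat = mat 1" "Smat ** Sinv = mat 1"
  by (simp_all add: mat2_eq mm_c gen_c mat1_c)
lemma TTi: "Tinv q ** Tmat q = mat 1" "Tmat q ** Tinv q = mat 1"
  by (simp_all add: mat2_eq mm_c gen_c mat1_c)

lemma hecke_mult: "A \<in> hecke_group q \<Longrightarrow> B \<in> hecke_group q \<Longrightarrow> A ** B \<in> hecke_group q"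
  by (induction A rule: hecke_group.induct) (auto simp: matrix_mul_assoc[symmetric] intro: hecke_group.intros)

lemma gens_in: "Smat \<in> hecke_group q" "Tmat q \<in> hecke_group q" "Sinv \<in> hecke_group q" "Tinv q \<in> hecke_group q"
  using hecke_group.S[OF hecke_group.id[of q]] hecke_group.T[OF hecke_group.id[of q]]
    hecke_group.Si[OF hecke_group.id[of q]] hecke_group.Ti[OF hecke_group.id[of q]] by simp_all

lemma Umat_in: "Umat q \<in> hecke_group q"
  unfolding Umat_def by (intro hecke_mult gens_in)

lemma Upow_in: "Upow q j \<in> hecke_group q"
  by (induction j) (auto intro: hecke_group.id hecke_mult Umat_in)

lemma hecke_inv: "A \<in> hecke_group q \<Longrightarrow> \<exists>A'\<in>hecke_group q. A' ** A = mat 1 \<and> A ** A' = mat 1"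
proof (induction A rule: hecke_group.induct)
  case id then show ?case by (auto intro: hecke_group.id)
next
  case (S A)
  then obtain A' where A': "A' \<in> hecke_group q" "A' ** A = mat 1" "A ** A' = mat 1" by blast
  have "(A' ** Sinv) ** (Smat ** A) = A' ** ((Sinv ** Smat) ** A)" by (simp add: matrix_mul_assoc)
  moreover have "(Smat ** A) ** (A' ** Sinv) = Smat ** ((A ** A') ** Sinv)" by (simp add: matrix_mul_assoc)
  ultimately show ?case using A' SSi gens_in hecke_mult by (metis matrix_mul_lid)
next
  case (T A)
  then obtain A' where A': "A' \<in> hecke_group q" "A' ** A = mat 1" "A ** A' = mat 1" by blast
  have "(A' ** Tinv q) ** (Tmat q ** A) = A' ** ((Tinv q ** Tmat q) ** A)" by (simp add: matrix_mul_assoc)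
  moreover have "(Tmat q ** A) ** (A' ** Tinv q) = Tmat q ** ((A ** A') ** Tinv q)" by (simp add: matrix_mul_assoc)
  ultimately show ?case using A' TTi gens_in hecke_mult by (metis matrix_mul_lid)
next
  case (Si A)
  then obtain A' where A': "A' \<in> hecke_group q" "A' ** A = mat 1" "A ** A' = mat 1" by blast
  have "(A' ** Smat) ** (Sinv ** A) = A' ** ((Smat ** Sinv) ** A)" by (simp add: matrix_mul_assoc)
  moreover have "(Sinv ** A) ** (A' ** Smat) = Sinv ** ((A ** A') ** Smat)" by (simp add: matrix_mul_assoc)
  ultimately show ?case using A' SSi gens_in hecke_mult by (metis matrix_mul_lid)
next
  case (Ti A)
  then obtain A' where A': "A' \<in> hecke_group q" "A' ** A = mat 1" "A ** A' = mat 1" by blast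
  have "(A' ** Tmat q) ** (Tinv q ** A) = A' ** ((Tmat q ** Tinv q) ** A)" by (simp add: matrix_mul_assoc)
  moreover have "(Tinv q ** A) ** (A' ** Tmat q) = Tinv q ** ((A ** A') ** Tmat q)" by (simp add: matrix_mul_assoc)
  ultimately show ?case using A' TTi gens_in hecke_mult by (metis matrix_mul_lid)
qed

lemma det_gens: "det Smat = 1" "det (Tmat q) = 1" "det Sinv = 1" "det (Tinv q) = 1" "det (mat 1 :: real^2^2) = 1"
  by (simp_all add: det_2 gen_c mat1_c)

lemma hecke_det: "A \<in> hecke_group q \<Longrightarrow> det A = 1"
  by (induction A rule: hecke_group.induct) (simp_all add: det_mul det_gens)

lemma wedge_mv: "wedge ((A::real^2^2) *v a) (A *v b) = det A * wedge a b"
  by (simp add: mv2 det_2 wedge_def algebra_simps)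

lemma mv_comb: "(A::real^2^2) *v comb p r z = comb (A *v p) (A *v r) z"
  by (simp add: mv2 vec2_eq algebra_simps)

lemma Lambda_act: "g \<in> hecke_group q \<Longrightarrow> x \<in> Lambda q \<Longrightarrow> g *v x \<in> Lambda q"
  unfolding Lambda_def by (auto simp: matrix_vector_mul_assoc intro: hecke_mult)

lemma e1_Lambda: "e1 \<in> Lambda q"
  unfolding Lambda_def using hecke_group.id by force

lemma Upow_comm: "Upow q j ** Umat q = Umat q ** Upow q j"
  by (induction j) (simp_all add: matrix_mul_assoc[symmetric])

context fixes q :: nat assumes q3: "3 \<le> q" begin

lemma piece_mat: "comb (P q j) (P q (Suc j)) z = Upow q j *v (Tmat q *v z)"
proof -
  have "Tmat q *v z = comb e1 (Umat q *v e1) z" by (simp add: T_mv U_mv vec2_eq)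
  then have "Upow q j *v (Tmat q *v z) = comb (Upow q j *v e1) ((Upow q j ** Umat q) *v e1) z"
    by (simp add: mv_comb matrix_vector_mul_assoc)
  then show ?thesis by (simp add: Upow_comm P_def)
qed

lemma Rn_Lambda: "z \<in> Rn q n \<Longrightarrow> z \<in> Lambda q"
proof (induction n arbitrary: z)
  case 0
  have "e2 = Smat *v e1" by (simp add: S_mv vec2_eq)
  then have "e2 \<in> Lambda q" using e1_Lambda Lambda_act gens_in by metis
  then show ?case using 0 e1_Lambda by (auto simp: Rn_0[OF q3])
next
  case (Suc n)
  then obtain j a where "a \<in> Rn q n" "z = comb (P q j) (P q (Suc j)) a"
    by (auto simp: Rn_Suc[OF q3])
  then show ?case using Suc.IH piece_mat Lambda_act Upow_in gens_in by metis
qed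

end


definition Xs :: "nat \<Rightarrow> (real^2) set" where
  "Xs q = {u. \<exists>n z. z \<in> Rn q n \<and> (u = z \<or> u = -z \<or> u = Smat *v z \<or> u = -(Smat *v z))}"

definition Ui :: "nat \<Rightarrow> real^2 \<Rightarrow> real^2" where
  "Ui q z = vector [z$2, lam q * z$2 - z$1]"

lemma Ui_c[simp]: "Ui q z $1 = z$2" "Ui q z $2 = lam q * z$2 - z$1" by (simp_all add: Ui_def)
lemma S_c[simp]: "(Smat *v z) $1 = - z$2" "(Smat *v z) $2 = z$1" by (simp_all add: S_mv)
lemma U_c[simp]: "(Umat q *v z) $1 = lam q * z$1 - z$2" "(Umat q *v z) $2 = z$1" by (simp_all add: U_mv)
lemma T_c[simp]: "(Tmat q *v z) $1 = z$1 + lam q * z$2" "(Tmat q *v z) $2 = z$2" by (simp_all add: T_mv)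
lemma Si_c[simp]: "(Sinv *v z) $1 = z$2" "(Sinv *v z) $2 = - z$1" by (simp_all add: Si_mv)
lemma Ti_c[simp]: "(Tinv q *v z) $1 = z$1 - lam q * z$2" "(Tinv q *v z) $2 = z$2" by (simp_all add: Ti_mv)

lemma Ui_P: "Ui q (P q (Suc j)) = P q j" by (simp add: P_Suc vec2_eq)
lemma Ui_comb: "Ui q (comb p r z) = comb (Ui q p) (Ui q r) z" by (simp add: vec2_eq algebra_simps)

lemma Xs_I: "z \<in> Rn q n \<Longrightarrow> z \<in> Xs q" "z \<in> Rn q n \<Longrightarrow> -z \<in> Xs q"
  "z \<in> Rn q n \<Longrightarrow> Smat *v z \<in> Xs q" "z \<in> Rn q n \<Longrightarrow> -(Smat *v z) \<in> Xs q"
  unfolding Xs_def by blast+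

context fixes q :: nat assumes q3: "3 \<le> q" begin

lemma P1: "P q (Suc 0) = vector [lam q, 1]" by (simp add: P_Suc P0 vec2_eq)

lemma piece_in: "j < q - 1 \<Longrightarrow> a \<in> Rn q n \<Longrightarrow> comb (P q j) (P q (Suc j)) a \<in> Rn q (Suc n)"
  by (auto simp: Rn_Suc[OF q3])

lemma obtain_piece: assumes "z \<in> Rn q n"
  obtains j a where "j < q - 1" "a \<in> Rn q n" "z = comb (P q j) (P q (Suc j)) a"
proof -
  have "z \<in> Rn q (Suc n)" using Rn_mono1[OF q3] assms by blast
  then show thesis using that by (auto simp: Rn_Suc[OF q3])
qed

lemma U_Xs1: assumes z: "z \<in> Rn q n" shows "Umat q *v z \<in> Xs q"
proof -
  obtain j a where j: "j < q - 1" "a \<in> Rn q n" "z = comb (P q j) (P q (Suc j)) a"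
    using obtain_piece z by blast
  have e: "Umat q *v z = comb (P q (Suc j)) (P q (Suc (Suc j))) a"
    using j by (simp add: mv_comb P_Suc)
  show ?thesis
  proof (cases "Suc j < q - 1")
    case True then show ?thesis using e piece_in j Xs_I by metis
  next
    case False
    then have sj: "Suc j = q - 1" using j by simp
    have pe: "P q (Suc j) = e2" using sj Pqm1[OF q3] by simp
    have "P q (Suc (Suc j)) = Umat q *v P q (Suc j)" by (rule P_Suc)
    then have "P q (Suc (Suc j)) = - e1" unfolding pe by (simp add: vec2_eq)
    then have "Umat q *v z = Smat *v a" unfolding e pe by (simp add: vec2_eq)
    then show ?thesis using j Xs_I by metis
  qed
qed

lemma U_Xs2: assumes z: "z \<in> Rn q n" shows "Umat q *v (Smat *v z) \<in> Xs q"
proof -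
  have "comb (P q 0) (P q (Suc 0)) z \<in> Rn q (Suc n)" using piece_in q3 z by simp
  moreover have "Umat q *v (Smat *v z) = - comb (P q 0) (P q (Suc 0)) z"
    by (simp add: P0 P1 vec2_eq)
  ultimately show ?thesis using Xs_I by metis
qed

lemma Ui_Xs1: assumes z: "z \<in> Rn q n" shows "Ui q z \<in> Xs q"
proof -
  obtain j a where j: "j < q - 1" "a \<in> Rn q n" "z = comb (P q j) (P q (Suc j)) a"
    using obtain_piece z by blast
  have e: "Ui q z = comb (Ui q (P q j)) (P q j) a"
    using j by (simp add: Ui_comb Ui_P)
  show ?thesis
  proof (cases j)
    case (Suc j')
    then have "Ui q z = comb (P q j') (P q (Suc j')) a" using e by (simp add: Ui_P)
    moreover have "j' < q - 1" using Suc j by simp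
    ultimately show ?thesis using piece_in j Xs_I by metis
  next
    case 0
    then have "Ui q z = - (Smat *v a)" unfolding e 0 by (simp add: P0 vec2_eq)
    then show ?thesis using j Xs_I by metis
  qed
qed

lemma Ui_Xs2: assumes z: "z \<in> Rn q n" shows "Ui q (Smat *v z) \<in> Xs q"
proof -
  have qq: "Suc (q - 2) = q - 1" "q - 2 < q - 1" using q3 by auto
  have "comb (P q (q-2)) (P q (Suc (q-2))) z \<in> Rn q (Suc n)" by (rule piece_in[OF qq(2) z])
  moreover have "P q (q - 2) = Ui q e2" using Ui_P[of q "q-2"] qq Pqm1[OF q3] by simp
  ultimately have "comb (Ui q e2) e2 z \<in> Rn q (Suc n)" unfolding qq(1) Pqm1[OF q3] by simp
  moreover have "Ui q (Smat *v z) = comb (Ui q e2) e2 z" by (simp add: vec2_eq algebra_simps)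
  ultimately show ?thesis using Xs_I by metis
qed

lemma Xs_E: assumes "u \<in> Xs q"
  obtains n z where "z \<in> Rn q n" "u = z \<or> u = -z \<or> u = Smat *v z \<or> u = -(Smat *v z)"
  using assms unfolding Xs_def by blast

lemma lin_neg: "Smat *v (-x) = - (Smat *v x)" "Umat q *v (-x) = - (Umat q *v x)" "Ui q (-x) = - Ui q x"
  by (simp_all add: vec2_eq)
lemma SS: "Smat *v (Smat *v x) = - x" by (simp add: vec2_eq)

lemma Xs_neg: "u \<in> Xs q \<Longrightarrow> -u \<in> Xs q"
  by (erule Xs_E) (auto intro: Xs_I)

lemma Xs_S: "u \<in> Xs q \<Longrightarrow> Smat *v u \<in> Xs q"
  by (erule Xs_E) (auto simp: lin_neg SS intro: Xs_I)

lemma Xs_U: "u \<in> Xs q \<Longrightarrow> Umat q *v u \<in> Xs q"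
  by (erule Xs_E) (auto simp: lin_neg intro: U_Xs1 U_Xs2 Xs_neg[OF U_Xs1] Xs_neg[OF U_Xs2])

lemma Xs_Ui: "u \<in> Xs q \<Longrightarrow> Ui q u \<in> Xs q"
  by (erule Xs_E) (auto simp: lin_neg intro: Ui_Xs1 Ui_Xs2 Xs_neg[OF Ui_Xs1] Xs_neg[OF Ui_Xs2])

lemma Lambda_Xs: "u \<in> Lambda q \<Longrightarrow> u \<in> Xs q"
proof -
  have "A \<in> hecke_group q \<Longrightarrow> A *v e1 \<in> Xs q" for A
  proof (induction A rule: hecke_group.induct)
    case id then show ?case using Xs_I(1)[OF e12_Rn(1)[OF q3, of 0]] by simp
  next
    case (S A) then show ?case by (simp add: matrix_vector_mul_assoc[symmetric] Xs_S)
  next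
    case (T A)
    have "Tmat q *v (A *v e1) = - (Umat q *v (Smat *v (A *v e1)))" by (simp add: vec2_eq)
    then show ?case using T by (simp add: matrix_vector_mul_assoc[symmetric] Xs_S Xs_U Xs_neg)
  next
    case (Si A)
    have "Sinv *v (A *v e1) = - (Smat *v (A *v e1))" by (simp add: vec2_eq)
    then show ?case using Si by (simp add: matrix_vector_mul_assoc[symmetric] Xs_S Xs_neg)
  next
    case (Ti A)
    have "Tinv q *v (A *v e1) = Smat *v (Ui q (A *v e1))" by (simp add: vec2_eq)
    then show ?case using Ti by (simp add: matrix_vector_mul_assoc[symmetric] Xs_S Xs_Ui)
  qed
  then show "u \<in> Lambda q \<Longrightarrow> u \<in> Xs q" unfolding Lambda_def by blast
qed

end


lemma wedge_simps: "wedge (Smat *v a) (Smat *v b) = wedge a b"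
  "wedge a (Smat *v b) = a$1 * b$1 + a$2 * b$2"
  "wedge (Smat *v a) b = - (a$1 * b$1 + a$2 * b$2)"
  "wedge (-a) b = - wedge a b" "wedge a (-b) = - wedge a b"
  by (simp_all add: wedge_def algebra_simps)

lemma S_inj: "(Smat *v a = Smat *v b) = (a = b)" by (auto simp: vec2_eq)

lemma dot_lemma: assumes "good z" "good z'" "z \<noteq> Smat *v z'" "z \<noteq> -(Smat *v z')"
  shows "1 \<le> z$1 * z'$1 + z$2 * z'$2"
proof -
  have p: "0 \<le> z$1" "0 \<le> z$2" "1 \<le> z$1 + z$2" "0 \<le> z'$1" "0 \<le> z'$2" "1 \<le> z'$1 + z'$2"
    using good_props assms(1,2) by auto
  show ?thesis
  proof (cases "1 \<le> z$1 \<and> 1 \<le> z$2")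
    case True
    have "z'$1 * 1 \<le> z'$1 * z$1" by (rule mult_left_mono) (use True p in auto)
    moreover have "z'$2 * 1 \<le> z'$2 * z$2" by (rule mult_left_mono) (use True p in auto)
    ultimately show ?thesis using p by (simp add: algebra_simps)
  next
    case F1: False
    show ?thesis
    proof (cases "1 \<le> z'$1 \<and> 1 \<le> z'$2")
      case True
      have "z$1 * 1 \<le> z$1 * z'$1" by (rule mult_left_mono) (use True p in auto)
      moreover have "z$2 * 1 \<le> z$2 * z'$2" by (rule mult_left_mono) (use True p in auto)
      ultimately show ?thesis using p by (simp add: algebra_simps)
    next
      case False
      then have "z = e1 \<or> z = e2" "z' = e1 \<or> z' = e2" using F1 assms(1,2) good_def by auto
      then show ?thesis using assms(3,4) by (auto simp: vec2_eq)
    qed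
  qed
qed

context fixes q :: nat assumes q3: "3 \<le> q" begin

lemma X_W: assumes u: "u \<in> Xs q" and u': "u' \<in> Xs q" and ne: "u \<noteq> u'" "u \<noteq> -u'"
  shows "1 \<le> \<bar>wedge u u'\<bar>"
proof -
  obtain n z where z: "z \<in> Rn q n" "u = z \<or> u = -z \<or> u = Smat *v z \<or> u = -(Smat *v z)"
    using u by (rule Xs_E[OF q3])
  obtain m z' where z': "z' \<in> Rn q m" "u' = z' \<or> u' = -z' \<or> u' = Smat *v z' \<or> u' = -(Smat *v z')"
    using u' by (rule Xs_E[OF q3])
  define N where "N = max n m"
  have zN: "z \<in> Rn q N" "z' \<in> Rn q N"
    using z(1) z'(1) Rn_mono[OF q3, of n N] Rn_mono[OF q3, of m N] N_def by auto
  have g: "good z" "good z'" using zN Rn_good[OF q3] by auto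
  have h1: "z \<noteq> z' \<Longrightarrow> 1 \<le> \<bar>wedge z z'\<bar>" using Rn_W[OF q3] zN by blast
  have h2: "z \<noteq> Smat *v z' \<Longrightarrow> z \<noteq> -(Smat *v z') \<Longrightarrow> 1 \<le> \<bar>wedge z (Smat *v z')\<bar>"
    using dot_lemma[OF g] by (simp add: wedge_simps)
  have h3: "z' \<noteq> Smat *v z \<Longrightarrow> z' \<noteq> -(Smat *v z) \<Longrightarrow> 1 \<le> \<bar>wedge (Smat *v z) z'\<bar>"
    using dot_lemma[OF g(2,1)] by (simp add: wedge_simps algebra_simps)
  have four: "1 \<le> \<bar>wedge a b\<bar>" if a: "a = z \<or> a = Smat *v z" and b: "b = z' \<or> b = Smat *v z'"
      and nab: "a \<noteq> b" "a \<noteq> -b" for a b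
  proof -
    consider "a = z" "b = z'" | "a = z" "b = Smat *v z'" | "a = Smat *v z" "b = z'"
      | "a = Smat *v z" "b = Smat *v z'" using a b by blast
    then show ?thesis
    proof cases
      case 1 then show ?thesis using h1 nab by simp
    next
      case 2 then show ?thesis using h2 nab by simp
    next
      case 3
      have "z' \<noteq> Smat *v z" "z' \<noteq> -(Smat *v z)" using 3 nab by auto
      then show ?thesis using h3 3 by simp
    next
      case 4
      have "z \<noteq> z'" using 4 nab by auto
      then show ?thesis using h1 4 by (simp add: wedge_simps(1))
    qed
  qed
  have red: "a \<noteq> b \<and> a \<noteq> -b \<and> \<bar>wedge u u'\<bar> = \<bar>wedge a b\<bar>"
    if "u = a \<or> u = -a" "u' = b \<or> u' = -b" for a b
    using that ne by (auto simp: wedge_simps(4,5))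
  obtain a where a: "a = z \<or> a = Smat *v z" "u = a \<or> u = -a" using z(2) by blast
  obtain b where b: "b = z' \<or> b = Smat *v z'" "u' = b \<or> u' = -b" using z'(2) by blast
  show ?thesis using red[OF a(2) b(2)] four[OF a(1) b(1)] by simp
qed

lemma part1: "\<forall>v0\<in>Lambda q. \<forall>v1\<in>Lambda q. v0 \<noteq> v1 \<and> v0 \<noteq> - v1 \<longrightarrow> \<bar>wedge v0 v1\<bar> \<ge> 1"
  using X_W Lambda_Xs[OF q3] by blast

end


definition Tk :: "nat \<Rightarrow> int \<Rightarrow> real^2^2" where
  "Tk q k = vector [vector [1, of_int k * lam q], vector [0, 1]]"

lemma Tk_c: "Tk q k $1$1 = 1" "Tk q k $1$2 = of_int k * lam q" "Tk q k $2$1 = 0" "Tk q k $2$2 = 1"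
  by (simp_all add: Tk_def)

lemma Tk_nat: "Tk q (int n) \<in> hecke_group q \<and> Tk q (- int n) \<in> hecke_group q"
proof (induction n)
  case 0
  have "Tk q 0 = mat 1" by (simp add: mat2_eq Tk_c mat1_c)
  then show ?case using hecke_group.id by simp
next
  case (Suc n)
  have "Tk q (int (Suc n)) = Tmat q ** Tk q (int n)" by (simp add: mat2_eq Tk_c mm_c gen_c algebra_simps)
  moreover have "Tk q (- int (Suc n)) = Tinv q ** Tk q (- int n)" by (simp add: mat2_eq Tk_c mm_c gen_c algebra_simps)
  ultimately show ?case using Suc hecke_group.T hecke_group.Ti by metis
qed

lemma Tk_in: "Tk q k \<in> hecke_group q"
proof (cases "0 \<le> k")
  case True then show ?thesis using Tk_nat[of q "nat k"] by simp
next
  case False then show ?thesis using Tk_nat[of q "nat (-k)"] by simp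
qed

lemma comb_e12: "comb e1 e2 z = z" by (simp add: vec2_eq)

lemma wedge_comb_l: "wedge (comb u0 u1 x) u1 = x$1 * wedge u0 u1"
  and wedge_comb_r: "wedge u0 (comb u0 u1 x) = x$2 * wedge u0 u1"
  by (simp_all add: wedge_def algebra_simps)

lemma comb_inj: "wedge u0 u1 = 1 \<Longrightarrow> comb u0 u1 x = comb u0 u1 y \<Longrightarrow> x = y"
  by (metis wedge_comb_l wedge_comb_r mult.right_neutral vec2_eq)

lemma S_e1: "Smat *v e1 = e2" by (simp add: vec2_eq)

lemma e2_Lambda: "e2 \<in> Lambda q"
  using Lambda_act[OF gens_in(1) e1_Lambda] S_e1 by metis

context fixes q :: nat assumes q3: "3 \<le> q" begin

lemma frame: assumes u0: "u0 \<in> Lambda q" and u1: "u1 \<in> Lambda q" and w: "wedge u0 u1 = 1"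
  shows "\<exists>g\<in>hecke_group q. g *v e1 = u0 \<and> g *v e2 = u1"
proof -
  obtain A where A: "A \<in> hecke_group q" "u0 = A *v e1" using u0 unfolding Lambda_def by blast
  obtain B where B: "B \<in> hecke_group q" "u1 = B *v e1" using u1 unfolding Lambda_def by blast
  obtain A' where A': "A' \<in> hecke_group q" "A' ** A = mat 1" "A ** A' = mat 1" using hecke_inv[OF A(1)] by blast
  define y where "y = A' *v u1"
  have yL: "y \<in> Lambda q" unfolding y_def using Lambda_act[OF A'(1) u1] .
  have "A' *v u0 = e1" using A A' by (simp add: matrix_vector_mul_assoc)
  then have "wedge e1 y = 1" using wedge_mv[of A' u0 u1] hecke_det[OF A'(1)] w y_def by simp
  then have y2: "y$2 = 1" by (simp add: wedge_def)
  define l where "l = lam q"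
  have l: "0 < l" "l < 2" using lam_pos[OF q3] lam_lt2[OF q3] l_def by auto
  define k where "k = \<lfloor>y$1 / l + 1/2\<rfloor>"
  have k1: "of_int k \<le> y$1 / l + 1/2" "y$1 / l + 1/2 < of_int k + 1" unfolding k_def by linarith+
  have "of_int k * l \<le> y$1 + l/2" using k1(1) l by (simp add: field_simps)
  moreover have "y$1 - l/2 < of_int k * l" using k1(2) l by (simp add: field_simps)
  ultimately have close: "\<bar>y$1 - of_int k * l\<bar> < 1" using l by linarith
  define t where "t = Tk q k *v e2"
  have tv: "t$1 = of_int k * l" "t$2 = 1" by (simp_all add: t_def mv2 Tk_c l_def)
  have tL: "t \<in> Lambda q" unfolding t_def using Lambda_act[OF Tk_in e2_Lambda] .
  have "y = t"
  proof (rule ccontr)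
    assume "y \<noteq> t"
    moreover have "y \<noteq> - t" using y2 tv by (auto simp: vec2_eq)
    ultimately have "1 \<le> \<bar>wedge y t\<bar>" using part1[OF q3] yL tL by blast
    then show False using close y2 tv by (simp add: wedge_def)
  qed
  define g where "g = A ** Tk q k"
  have "g *v e1 = u0" using A by (simp add: g_def matrix_vector_mul_assoc[symmetric] mv2 mm_c Tk_c vec2_eq)
  moreover have "g *v e2 = u1"
  proof -
    have "g *v e2 = A *v y" using \<open>y = t\<close> by (simp add: g_def t_def matrix_vector_mul_assoc)
    also have "\<dots> = u1" using A' by (simp add: y_def matrix_vector_mul_assoc)
    finally show ?thesis .
  qed
  moreover have "g \<in> hecke_group q" unfolding g_def using hecke_mult A(1) Tk_in by blast
  ultimately show ?thesis by blast
qed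

lemma comb_Lambda: assumes "u0 \<in> Lambda q" "u1 \<in> Lambda q" "wedge u0 u1 = 1" "z \<in> Rn q n"
  shows "comb u0 u1 z \<in> Lambda q"
proof -
  obtain g where g: "g \<in> hecke_group q" "g *v e1 = u0" "g *v e2 = u1" using frame assms by blast
  have "g *v z = comb u0 u1 z" using mv_comb[of g e1 e2 z] g by (simp add: comb_e12)
  then show ?thesis using Lambda_act[OF g(1) Rn_Lambda[OF q3 assms(4)]] by simp
qed

lemma disc_ivt: "0 < f (0::nat) \<Longrightarrow> \<not> 0 < (f k :: real) \<Longrightarrow> \<exists>j<k. 0 < f j \<and> \<not> 0 < f (Suc j)"
proof (induction k)
  case 0 then show ?case by simp
next
  case (Suc k)
  show ?case
  proof (cases "0 < f k")
    case True then show ?thesis using Suc by auto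
  next
    case False then show ?thesis using Suc by (metis less_Suc_eq)
  qed
qed

lemma wedge0_par: "p \<noteq> 0 \<Longrightarrow> wedge p w = 0 \<Longrightarrow> \<exists>c. w = c *\<^sub>R (p::real^2)"
proof -
  assume p: "p \<noteq> 0" and w: "wedge p w = 0"
  show ?thesis
  proof (cases "p$1 = 0")
    case True
    then have "p$2 \<noteq> 0" using p by (auto simp: vec2_eq)
    then show ?thesis using True w
      by (intro exI[of _ "w$2 / p$2"]) (auto simp: vec2_eq wedge_def)
  next
    case False
    have "w$2 = w$1 / p$1 * p$2" using False w by (simp add: wedge_def field_simps)
    then show ?thesis using False by (intro exI[of _ "w$1 / p$1"]) (auto simp: vec2_eq)
  qed
qed

lemma cramer: assumes "wedge p r = 1" shows "w = wedge w r *\<^sub>R p + wedge p w *\<^sub>R (r::real^2)"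
proof -
  have h: "p$1*r$2 - r$1*p$2 = 1" using assms by (simp add: wedge_def)
  have 1: "(w$1*r$2 - r$1*w$2)*p$1 + (p$1*w$2 - w$1*p$2)*r$1 = w$1*(p$1*r$2 - r$1*p$2)"
    by (simp add: algebra_simps)
  have 2: "(w$1*r$2 - r$1*w$2)*p$2 + (p$1*w$2 - w$1*p$2)*r$2 = w$2*(p$1*r$2 - r$1*p$2)"
    by (simp add: algebra_simps)
  show ?thesis unfolding vec2_eq using 1 2 h by (simp add: wedge_def)
qed

lemma P_ne0: "j \<le> q - 1 \<Longrightarrow> P q j \<noteq> 0"
proof -
  assume j: "j \<le> q - 1"
  show ?thesis
  proof (cases "j = q - 1")
    case True then show ?thesis using Pqm1[OF q3] by (auto simp: vec2_eq)
  next
    case False then have "1 \<le> P q j $1" using P_bounds[OF q3, of j] j by simp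
    then show ?thesis by (auto simp: vec2_eq)
  qed
qed

lemma wedge_PP: "wedge (P q j) (P q (Suc j)) = 1"
  using wedge_P2[OF q3, of j "Suc j"] sin_theta_pos[OF q3] by (simp add: sn_def)

lemma split_cone: assumes w: "0 < w$1" "0 < w$2" and np: "\<forall>j \<le> q - 1. \<forall>c. w \<noteq> c *\<^sub>R P q j"
  shows "\<exists>j<q-1. \<exists>a b. 0 < a \<and> 0 < b \<and> w = a *\<^sub>R P q j + b *\<^sub>R P q (Suc j)"
proof -
  define f where "f j = wedge (P q j) w" for j
  have f0: "0 < f 0" using w by (simp add: f_def P0 wedge_def)
  have pq: "P q (q - 1) = e2" by (rule Pqm1[OF q3])
  have fq: "\<not> 0 < f (q - 1)" using w unfolding f_def pq by (simp add: wedge_def)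
  obtain j where j: "j < q - 1" "0 < f j" "\<not> 0 < f (Suc j)" using disc_ivt[of f "q - 1"] f0 fq by blast
  have "f (Suc j) \<noteq> 0"
  proof
    assume "f (Suc j) = 0"
    then obtain c where "w = c *\<^sub>R P q (Suc j)" using wedge0_par[OF P_ne0] j(1) f_def by fastforce
    then show False using np j(1) by auto
  qed
  then have fs: "f (Suc j) < 0" using j(3) by simp
  have c: "w = wedge w (P q (Suc j)) *\<^sub>R P q j + wedge (P q j) w *\<^sub>R P q (Suc j)"
    using cramer[OF wedge_PP] .
  have h: "wedge w (P q (Suc j)) = - f (Suc j)" by (simp add: f_def wedge_def)
  have fj: "wedge (P q j) w = f j" by (simp add: f_def)
  have "w = (- f (Suc j)) *\<^sub>R P q j + f j *\<^sub>R P q (Suc j)" using c unfolding h fj .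
  moreover have "0 < - f (Suc j)" using fs by simp
  ultimately show ?thesis using j by blast
qed

lemma P_in_R1: "j \<le> q - 1 \<Longrightarrow> P q j \<in> Rn q (Suc 0)"
proof (cases "j = q - 1")
  case True then show ?thesis using e12_Rn[OF q3] Pqm1[OF q3] by simp
next
  case False
  assume "j \<le> q - 1"
  then have "j < q - 1" using False by simp
  then have "comb (P q j) (P q (Suc j)) e1 \<in> Rn q (Suc 0)" using piece_in[OF q3] e12_Rn[OF q3] by blast
  then show ?thesis by simp
qed

lemma core: assumes v: "0 < v$1" "0 < v$2" and np: "\<forall>n. \<forall>z\<in>Rn q n. \<forall>c. v \<noteq> c *\<^sub>R z"
  shows "\<exists>p r a b. (\<forall>m. \<forall>z\<in>Rn q m. comb p r z \<in> Rn q (N + m)) \<and> wedge p r = 1 \<and> 0 < a \<and> 0 < b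
     \<and> v = a *\<^sub>R p + b *\<^sub>R r \<and> real N + 2 \<le> p$1 + p$2 + r$1 + r$2"
proof (induction N)
  case 0
  have "v = v$1 *\<^sub>R e1 + v$2 *\<^sub>R e2" by (simp add: vec2_eq)
  then show ?case using v by (intro exI[of _ e1] exI[of _ e2] exI[of _ "v$1"] exI[of _ "v$2"])
    (auto simp: comb_e12 wedge_def)
next
  case (Suc N)
  then obtain p r a b where E: "\<forall>m. \<forall>z\<in>Rn q m. comb p r z \<in> Rn q (N + m)" and
    pr: "wedge p r = 1" "0 < a" "0 < b" "v = a *\<^sub>R p + b *\<^sub>R r" "real N + 2 \<le> p$1 + p$2 + r$1 + r$2"
    by blast
  have pR: "p \<in> Rn q N" "r \<in> Rn q N" using E e12_Rn[OF q3, of 0] by (metis add_0_right comb_e1 comb_e2)+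
  have gp: "1 \<le> p$1 + p$2" "1 \<le> r$1 + r$2" using pR Rn_good[OF q3] good_props by blast+
  define w where "w = (vector [a, b] :: real^2)"
  have vw: "v = comb p r w" using pr(4) by (simp add: w_def comb_def)
  have npw: "\<forall>j \<le> q - 1. \<forall>c. w \<noteq> c *\<^sub>R P q j"
  proof (intro allI impI)
    fix j c assume j: "j \<le> q - 1"
    show "w \<noteq> c *\<^sub>R P q j"
    proof
      assume "w = c *\<^sub>R P q j"
      then have "v = c *\<^sub>R comb p r (P q j)" using vw by (simp add: comb_def vec2_eq algebra_simps)
      moreover have "comb p r (P q j) \<in> Rn q (N + Suc 0)" using E P_in_R1[OF j] by blast
      ultimately show False using np by blast
    qed
  qed
  obtain j a' b' where j: "j < q - 1" "0 < a'" "0 < b'" "w = a' *\<^sub>R P q j + b' *\<^sub>R P q (Suc j)"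
    using split_cone[of w] npw pr(2,3) by (auto simp: w_def)
  define p' where "p' = comb p r (P q j)"
  define r' where "r' = comb p r (P q (Suc j))"
  have E': "\<forall>m. \<forall>z\<in>Rn q m. comb p' r' z \<in> Rn q (Suc N + m)"
  proof (intro allI ballI)
    fix m z assume z: "z \<in> Rn q m"
    have "comb p' r' z = comb p r (comb (P q j) (P q (Suc j)) z)" by (simp add: p'_def r'_def comb_comb)
    moreover have pz: "comb (P q j) (P q (Suc j)) z \<in> Rn q (Suc m)" using piece_in[OF q3 j(1) z] .
    have "comb p r (comb (P q j) (P q (Suc j)) z) \<in> Rn q (N + Suc m)" using E[rule_format, OF pz] .
    ultimately show "comb p' r' z \<in> Rn q (Suc N + m)" using \<open>comb p r (comb (P q j) (P q (Suc j)) z) \<in> Rn q (N + Suc m)\<close> by simp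
  qed
  have w': "wedge p' r' = 1" using pr(1) wedge_PP by (simp add: p'_def r'_def wedge_comb)
  have v': "v = a' *\<^sub>R p' + b' *\<^sub>R r'" using vw j(4) by (simp add: p'_def r'_def comb_lin)
  have "p$1 + p$2 + r$1 + r$2 + 1 \<le> (P q j $1 + P q (Suc j) $1) * (p$1 + p$2) + (P q j $2 + P q (Suc j) $2) * (r$1 + r$2)"
    using piece_ss2[OF q3 j(1) gp] by simp
  moreover have "p'$1 + p'$2 + r'$1 + r'$2 = (P q j $1 + P q (Suc j) $1) * (p$1 + p$2) + (P q j $2 + P q (Suc j) $2) * (r$1 + r$2)"
    by (simp add: p'_def r'_def algebra_simps)
  ultimately have "real (Suc N) + 2 \<le> p'$1 + p'$2 + r'$1 + r'$2" using pr(5) by simp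
  then show ?case using E' w' v' j by blast
qed

end


lemma open_cone_iff: "v \<in> open_cone w0 w1 \<longleftrightarrow> (\<exists>a b. 0 < a \<and> 0 < b \<and> v = a *\<^sub>R w0 + b *\<^sub>R w1)"
  unfolding open_cone_def by blast

lemma wedge_bound: "\<bar>wedge a b\<bar> \<le> 2 * norm a * norm b"
proof -
  have "\<bar>a$1\<bar> \<le> norm a" "\<bar>a$2\<bar> \<le> norm a" "\<bar>b$1\<bar> \<le> norm b" "\<bar>b$2\<bar> \<le> norm b"
    by (simp_all add: component_le_norm_cart)
  then have "\<bar>a$1\<bar> * \<bar>b$2\<bar> \<le> norm a * norm b" "\<bar>b$1\<bar> * \<bar>a$2\<bar> \<le> norm b * norm a"
    by (simp_all add: mult_mono)
  moreover have "\<bar>wedge a b\<bar> \<le> \<bar>a$1\<bar> * \<bar>b$2\<bar> + \<bar>b$1\<bar> * \<bar>a$2\<bar>"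
    unfolding wedge_def by (metis abs_mult abs_triangle_ineq4)
  ultimately show ?thesis by (simp add: algebra_simps)
qed

context fixes q :: nat assumes q3: "3 \<le> q" begin

lemma least_stage: "z \<in> Rn q N \<Longrightarrow> z \<notin> Rn q 0 \<Longrightarrow> \<exists>n\<ge>1. z \<in> Rn q n \<and> z \<notin> Rn q (n - 1)"
proof (induction N)
  case 0 then show ?case by simp
next
  case (Suc N)
  show ?case
  proof (cases "z \<in> Rn q N")
    case True then show ?thesis using Suc by blast
  next
    case False then show ?thesis using Suc.prems by (intro exI[of _ "Suc N"]) auto
  qed
qed

lemma gc: assumes w: "wedge u0 u1 = 1" and z: "z \<in> Rn q N" "z \<notin> Rn q 0"
  shows "grandchild q u0 u1 (comb u0 u1 z)"
proof -
  obtain n where n: "1 \<le> n" "z \<in> Rn q n" "z \<notin> Rn q (n - 1)" using least_stage z by blast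
  have "comb u0 u1 z \<notin> comb u0 u1 ` Rn q (n - 1)" using n comb_inj[OF w] by blast
  then show ?thesis unfolding grandchild_def generated_at_def set_sb_list using n by blast
qed

lemma no_small: fixes a \<alpha> \<beta> x N :: real assumes "0 < a" "0 < \<beta>" "\<alpha> = a + \<beta> * x" "N \<le> x" "\<alpha> / \<beta> \<le> N"
  shows False
proof -
  have "\<alpha> \<le> N * \<beta>" using assms(5) pos_divide_le_eq[OF assms(2)] by simp
  then have "\<alpha> \<le> \<beta> * N" by (simp add: mult.commute)
  also have "\<dots> \<le> \<beta> * x" using assms(2,4) by simp
  finally show False using assms by simp
qed

lemma part2: "\<forall>v u0 u1. v \<noteq> 0 \<and> (\<forall>u\<in>Lambda q. \<forall>c::real. v \<noteq> c *\<^sub>R u)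
        \<and> u0 \<in> Lambda q \<and> u1 \<in> Lambda q \<and> wedge u0 u1 = 1 \<and> v \<in> open_cone u0 u1
        \<longrightarrow> (\<exists>w0 w1. grandchild q u0 u1 w0 \<and> grandchild q u0 u1 w1 \<and> wedge w0 w1 = 1
              \<and> {w0, w1} \<noteq> {u0, u1} \<and> v \<in> open_cone w0 w1)"
proof (intro allI impI)
  fix v u0 u1
  assume H: "v \<noteq> 0 \<and> (\<forall>u\<in>Lambda q. \<forall>c::real. v \<noteq> c *\<^sub>R u)
        \<and> u0 \<in> Lambda q \<and> u1 \<in> Lambda q \<and> wedge u0 u1 = 1 \<and> v \<in> open_cone u0 u1"
  then have u: "u0 \<in> Lambda q" "u1 \<in> Lambda q" and w: "wedge u0 u1 = 1"
    and npv: "\<forall>u\<in>Lambda q. \<forall>c::real. v \<noteq> c *\<^sub>R u" by auto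
  obtain \<alpha> \<beta> where ab: "0 < \<alpha>" "0 < \<beta>" "v = \<alpha> *\<^sub>R u0 + \<beta> *\<^sub>R u1"
    using H open_cone_iff by blast
  define v' where "v' = (vector [\<alpha>, \<beta>] :: real^2)"
  have vv': "v = comb u0 u1 v'" using ab by (simp add: v'_def comb_def)
  have np: "\<forall>n. \<forall>z\<in>Rn q n. \<forall>c. v' \<noteq> c *\<^sub>R z"
  proof (intro allI ballI notI)
    fix n z c assume z: "z \<in> Rn q n" and e: "v' = c *\<^sub>R z"
    have "v = c *\<^sub>R comb u0 u1 z" using vv' e by (simp add: comb_def vec2_eq algebra_simps)
    then show False using npv comb_Lambda[OF q3 u w z] by blast
  qed
  define N where "N = nat \<lceil>\<alpha>/\<beta> + \<beta>/\<alpha>\<rceil>"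
  have N1: "\<alpha>/\<beta> \<le> real N" "\<beta>/\<alpha> \<le> real N"
  proof -
    have "0 \<le> \<alpha>/\<beta>" "0 \<le> \<beta>/\<alpha>" using ab by auto
    moreover have "\<alpha>/\<beta> + \<beta>/\<alpha> \<le> real N" unfolding N_def by linarith
    ultimately show "\<alpha>/\<beta> \<le> real N" "\<beta>/\<alpha> \<le> real N" by linarith+
  qed
  obtain p r a b where E: "\<forall>m. \<forall>z\<in>Rn q m. comb p r z \<in> Rn q (N + m)" and
    pr: "wedge p r = 1" "0 < a" "0 < b" "v' = a *\<^sub>R p + b *\<^sub>R r" "real N + 2 \<le> p$1 + p$2 + r$1 + r$2"
    using core[OF q3, of v' N] np ab by (auto simp: v'_def)
  have pR: "p \<in> Rn q N" "r \<in> Rn q N" using E e12_Rn[OF q3, of 0] by (metis add_0_right comb_e1 comb_e2)+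
  have gp: "good p" "good r" using pR Rn_good[OF q3] by auto
  have c1: "\<alpha> = a * p$1 + b * r$1" "\<beta> = a * p$2 + b * r$2"
    using pr(4) by (simp_all add: v'_def vec2_eq)
  have pe2: "p \<noteq> e2"
  proof
    assume "p = e2" then have "r$1 = -1" using pr(1) by (simp add: wedge_def)
    then show False using good_props[OF gp(2)] by simp
  qed
  have re1: "r \<noteq> e1"
  proof
    assume "r = e1" then have "p$2 = -1" using pr(1) by (simp add: wedge_def)
    then show False using good_props[OF gp(1)] by simp
  qed
  have pe1: "p \<noteq> e1"
  proof
    assume p: "p = e1"
    then have r2: "r$2 = 1" using pr(1) by (simp add: wedge_def)
    have "\<alpha> = a + \<beta> * r$1" using c1 p r2 by simp
    moreover have "real N \<le> r$1" using pr(5) p r2 by simp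
    ultimately show False using no_small[OF pr(2) ab(2) _ _ N1(1)] by blast
  qed
  have re2: "r \<noteq> e2"
  proof
    assume r: "r = e2"
    then have p1: "p$1 = 1" using pr(1) by (simp add: wedge_def)
    have "\<beta> = b + \<alpha> * p$2" using c1 r p1 by simp
    moreover have "real N \<le> p$2" using pr(5) r p1 by simp
    ultimately show False using no_small[OF pr(3) ab(1) _ _ N1(2)] by blast
  qed
  have p0: "p \<notin> Rn q 0" "r \<notin> Rn q 0" using pe1 pe2 re1 re2 by (auto simp: Rn_0[OF q3])
  define w0 where "w0 = comb u0 u1 p"
  define w1 where "w1 = comb u0 u1 r"
  have g: "grandchild q u0 u1 w0" "grandchild q u0 u1 w1"
    unfolding w0_def w1_def using gc[OF w pR(1) p0(1)] gc[OF w pR(2) p0(2)] by auto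
  have ww: "wedge w0 w1 = 1" unfolding w0_def w1_def using w pr(1) by (simp add: wedge_comb)
  have "w0 \<noteq> u0" "w0 \<noteq> u1"
    using comb_inj[OF w, of p e1] comb_inj[OF w, of p e2] pe1 pe2 unfolding w0_def by auto
  then have ne: "{w0, w1} \<noteq> {u0, u1}" by auto
  have "v = a *\<^sub>R w0 + b *\<^sub>R w1" unfolding w0_def w1_def vv' pr(4) by (rule comb_lin)
  then have "v \<in> open_cone w0 w1" using pr(2,3) open_cone_iff by blast
  then show "\<exists>w0 w1. grandchild q u0 u1 w0 \<and> grandchild q u0 u1 w1 \<and> wedge w0 w1 = 1
              \<and> {w0, w1} \<noteq> {u0, u1} \<and> v \<in> open_cone w0 w1" using g ww ne by blast
qed

lemma part3: "\<forall>u0 u1 (w :: nat \<Rightarrow> real^2). u0 \<in> Lambda q \<and> u1 \<in> Lambda q \<and> wedge u0 u1 = 1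
        \<and> (\<forall>n\<ge>1. generated_at q u0 u1 n (w n))
        \<longrightarrow> filterlim (\<lambda>n. norm (w n)) at_top sequentially"
proof (intro allI impI)
  fix u0 u1 and w :: "nat \<Rightarrow> real^2"
  assume H: "u0 \<in> Lambda q \<and> u1 \<in> Lambda q \<and> wedge u0 u1 = 1 \<and> (\<forall>n\<ge>1. generated_at q u0 u1 n (w n))"
  then have wu: "wedge u0 u1 = 1" and gen: "\<And>n. 1 \<le> n \<Longrightarrow> generated_at q u0 u1 n (w n)" by auto
  define C where "C = 2 * (norm u0 + norm u1)"
  have "u0 \<noteq> 0" using wu by (auto simp: wedge_def)
  then have Cp: "0 < C" unfolding C_def by (simp add: add_pos_nonneg)
  have bound: "real n \<le> C * norm (w n)" if n: "1 \<le> n" for n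
  proof -
    obtain z where z: "z \<in> Rn q n" "w n = comb u0 u1 z" "w n \<notin> comb u0 u1 ` Rn q (n - 1)"
      using gen[OF n] unfolding generated_at_def set_sb_list by blast
    have zn: "z \<notin> Rn q (n - 1)" using z by blast
    have "real (n - 1) + 2 \<le> z$1 + z$2" using growth[OF q3, of z "n - 1"] z(1) zn n by simp
    then have "real n \<le> z$1 + z$2" using n by linarith
    also have "z$1 = wedge (w n) u1" using z(2) wu by (simp add: wedge_comb_l)
    also have "z$2 = wedge u0 (w n)" using z(2) wu by (simp add: wedge_comb_r)
    also have "wedge (w n) u1 + wedge u0 (w n) \<le> 2 * norm (w n) * norm u1 + 2 * norm u0 * norm (w n)"
      using wedge_bound[of "w n" u1] wedge_bound[of u0 "w n"] by linarith
    also have "\<dots> = C * norm (w n)" by (simp add: C_def algebra_simps)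
    finally show ?thesis .
  qed
  have lim: "filterlim (\<lambda>n. (1 / C) * real n) at_top sequentially"
    by (rule filterlim_tendsto_pos_mult_at_top[OF tendsto_const]) (use Cp filterlim_real_sequentially in auto)
  have ev: "eventually (\<lambda>n. (1 / C) * real n \<le> norm (w n)) sequentially"
  proof (rule eventually_sequentiallyI[of 1])
    fix n :: nat assume "1 \<le> n"
    then show "(1 / C) * real n \<le> norm (w n)" using bound Cp by (simp add: divide_le_eq mult.commute)
  qed
  show "filterlim (\<lambda>n. norm (w n)) at_top sequentially" by (rule filterlim_at_top_mono[OF lim ev])
qed

end


context fixes q :: nat assumes q3: "3 \<le> q" begin

lemma approx: assumes u: "u0 \<in> Lambda q" "u1 \<in> Lambda q" and wu: "wedge u0 u1 = 1"
  and v': "0 < v'$1" "0 < v'$2" and v1: "comb u0 u1 v' $1 = 1" and e: "0 < e"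
  shows "\<exists>y\<in>{v$2 / v$1 | v. v \<in> Lambda q \<and> v$1 \<noteq> 0}. dist y (comb u0 u1 v' $2) < e"
proof -
  define v where "v = comb u0 u1 v'"
  define s where "s = v$2"
  have v1': "v$1 = 1" using v1 v_def by simp
  show ?thesis
  proof (cases "\<exists>u\<in>Lambda q. \<exists>c. v = c *\<^sub>R u")
    case True
    then obtain u c where uc: "u \<in> Lambda q" "v = c *\<^sub>R u" by blast
    then have "c * u$1 = 1" "c * u$2 = s" using v1' s_def by auto
    then have u1: "u$1 \<noteq> 0" by auto
    have "c = 1 / u$1" using \<open>c * u$1 = 1\<close> u1 by (simp add: field_simps)
    then have "u$2 / u$1 = s" using \<open>c * u$2 = s\<close> by simp
    note u1 this
    then have "u$2/u$1 \<in> {v$2 / v$1 | v. v \<in> Lambda q \<and> v$1 \<noteq> 0}" using uc(1) by blast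
    moreover have "dist (u$2/u$1) (comb u0 u1 v' $2) < e" using \<open>u$2 / u$1 = s\<close> e s_def v_def by simp
    ultimately show ?thesis by blast
  next
    case False
    have np: "\<forall>n. \<forall>z\<in>Rn q n. \<forall>c. v' \<noteq> c *\<^sub>R z"
    proof (intro allI ballI notI)
      fix n z c assume z: "z \<in> Rn q n" and ez: "v' = c *\<^sub>R z"
      have "v = c *\<^sub>R comb u0 u1 z" using ez by (simp add: v_def comb_def vec2_eq algebra_simps)
      then show False using False comb_Lambda[OF q3 u wu z] by blast
    qed
    define \<sigma> where "\<sigma> = v'$1 + v'$2"
    have sp0: "0 < \<sigma>" using v' \<sigma>_def by simp
    define N where "N = nat \<lceil>4 * \<sigma> * \<sigma> / e\<rceil>"
    have NN: "4 * \<sigma> * \<sigma> / e \<le> real N" unfolding N_def by linarith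
    obtain p r a b where E: "\<forall>m. \<forall>z\<in>Rn q m. comb p r z \<in> Rn q (N + m)" and
      pr: "wedge p r = 1" "0 < a" "0 < b" "v' = a *\<^sub>R p + b *\<^sub>R r" "real N + 2 \<le> p$1 + p$2 + r$1 + r$2"
      using core[OF q3 v' np, of N] by blast
    have pR: "p \<in> Rn q N" "r \<in> Rn q N" using E e12_Rn[OF q3, of 0] by (metis add_0_right comb_e1 comb_e2)+
    have gp: "1 \<le> p$1 + p$2" "1 \<le> r$1 + r$2" using pR Rn_good[OF q3] good_props by blast+
    define sp where "sp = p$1 + p$2"
    define sr where "sr = r$1 + r$2"
    have sig: "\<sigma> = a * sp + b * sr" using pr(4) by (simp add: \<sigma>_def sp_def sr_def vec2_eq algebra_simps)
    have t1: "0 \<le> a * sp" "0 \<le> b * sr" using pr gp sp_def sr_def by auto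
    have h1: "a * sp \<le> \<sigma>" "b * sr \<le> \<sigma>" using sig t1 by linarith+
    have h2: "(a * sp) * (b * sr) \<le> \<sigma> * \<sigma>" by (rule mult_mono) (use h1 t1 sp0 in auto)
    have h3: "sp + sr \<le> 2 * (sp * sr)"
    proof -
      have "sp * 1 \<le> sp * sr" by (rule mult_left_mono) (use gp sp_def sr_def in auto)
      moreover have "1 * sr \<le> sp * sr" by (rule mult_right_mono) (use gp sp_def sr_def in auto)
      ultimately show ?thesis by simp
    qed
    have ab0: "0 < a * b" using pr by simp
    have h4: "a * b * (real N + 2) \<le> 2 * (\<sigma> * \<sigma>)"
    proof -
      have "real N + 2 \<le> sp + sr" using pr(5) sp_def sr_def by simp
      then have "a * b * (real N + 2) \<le> a * b * (sp + sr)" using ab0 by (intro mult_left_mono) auto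
      also have "\<dots> \<le> a * b * (2 * (sp * sr))" using h3 ab0 by (intro mult_left_mono) auto
      also have "\<dots> = 2 * ((a * sp) * (b * sr))" by (simp add: algebra_simps)
      also have "\<dots> \<le> 2 * (\<sigma> * \<sigma>)" using h2 by simp
      finally show ?thesis .
    qed
    have "4 * \<sigma> * \<sigma> \<le> e * real N" using NN e by (simp add: divide_le_eq mult.commute)
    then have "4 * \<sigma> * \<sigma> < e * (real N + 2)" using e by (simp add: algebra_simps)
    then have "(2 * (a * b)) * (real N + 2) < e * (real N + 2)" using h4 by (simp add: algebra_simps)
    then have small: "2 * (a * b) < e" by (rule mult_right_less_imp_less) simp
    define w0 where "w0 = comb u0 u1 p"
    define w1 where "w1 = comb u0 u1 r"
    have wL: "w0 \<in> Lambda q" "w1 \<in> Lambda q" using comb_Lambda[OF q3 u wu] pR w0_def w1_def by auto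
    have ww: "wedge w0 w1 = 1" unfolding w0_def w1_def using wu pr(1) by (simp add: wedge_comb)
    have vw: "v = a *\<^sub>R w0 + b *\<^sub>R w1" unfolding w0_def w1_def v_def pr(4) by (rule comb_lin)
    have one: "1 = a * w0$1 + b * w1$1" using v1' vw by simp
    show ?thesis
    proof (cases "1/2 \<le> a * w0$1")
      case True
      have "0 < a * w0$1" using True by linarith
      then have w0p: "0 < w0$1" using pr(2) zero_less_mult_pos by blast
      have "wedge w0 v = b" using vw ww by (simp add: wedge_def algebra_simps)
      then have "w0$1 * s - w0$2 = b" using v1' s_def by (simp add: wedge_def)
      then have d: "s - w0$2 / w0$1 = b / w0$1" using w0p by (simp add: field_simps)
      have "b \<le> 2 * (a * b) * w0$1"
      proof -
        have "b * 1 \<le> b * (2 * (a * w0$1))" by (rule mult_left_mono) (use True pr in auto)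
        then show ?thesis by (simp add: algebra_simps)
      qed
      then have "b / w0$1 \<le> 2 * (a * b)" using w0p by (simp add: divide_le_eq)
      moreover have "0 \<le> b / w0$1" using pr(3) w0p by simp
      ultimately have "dist (w0$2 / w0$1) s < e" using d small unfolding dist_real_def abs_less_iff by linarith
      moreover have "w0$2 / w0$1 \<in> {v$2 / v$1 | v. v \<in> Lambda q \<and> v$1 \<noteq> 0}" using wL w0p by (intro CollectI exI[of _ w0]) simp
      ultimately show ?thesis using s_def v_def by blast
    next
      case False
      then have Tb: "1/2 \<le> b * w1$1" using one by linarith
      have "0 < b * w1$1" using Tb by linarith
      then have w1p: "0 < w1$1" using pr(3) zero_less_mult_pos by blast
      have "wedge v w1 = a" using vw ww by (simp add: wedge_def algebra_simps)
      then have "w1$2 - w1$1 * s = a" using v1' s_def by (simp add: wedge_def algebra_simps)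
      then have d: "w1$2 / w1$1 - s = a / w1$1" using w1p by (simp add: field_simps)
      have "a \<le> 2 * (a * b) * w1$1"
      proof -
        have "a * 1 \<le> a * (2 * (b * w1$1))" by (rule mult_left_mono) (use Tb pr in auto)
        then show ?thesis by (simp add: algebra_simps)
      qed
      then have "a / w1$1 \<le> 2 * (a * b)" using w1p by (simp add: divide_le_eq)
      moreover have "0 \<le> a / w1$1" using pr(2) w1p by simp
      ultimately have "dist (w1$2 / w1$1) s < e" using d small unfolding dist_real_def abs_less_iff by linarith
      moreover have "w1$2 / w1$1 \<in> {v$2 / v$1 | v. v \<in> Lambda q \<and> v$1 \<noteq> 0}" using wL w1p by (intro CollectI exI[of _ w1]) simp
      ultimately show ?thesis using s_def v_def by blast
    qed
  qed
qed

lemma part4: "closure {v$2 / v$1 | v. v \<in> Lambda q \<and> v$1 \<noteq> 0} = (UNIV :: real set)"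
proof -
  let ?S = "{v$2 / v$1 | v. v \<in> Lambda q \<and> v$1 \<noteq> 0}"
  have "s \<in> closure ?S" for s
  proof (cases "s = 0")
    case True
    have "e1$2 / e1$1 \<in> ?S" using e1_Lambda by (intro CollectI exI[of _ e1]) simp
    then have "s \<in> ?S" using True by simp
    then show ?thesis using closure_subset by (rule subsetD[rotated])
  next
    case False
    show ?thesis unfolding closure_approachable
    proof (intro allI impI)
      fix e :: real assume e: "0 < e"
      show "\<exists>y\<in>?S. dist y s < e"
      proof (cases "0 < s")
        case True
        define v' where "v' = (vector [1, s] :: real^2)"
        have "comb e1 e2 v' $1 = 1" "comb e1 e2 v' $2 = s" by (simp_all add: v'_def)
        moreover have "wedge e1 e2 = 1" by (simp add: wedge_def)
        moreover have "0 < v'$1" "0 < v'$2" using True by (simp_all add: v'_def)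
        ultimately show ?thesis using approx[OF e1_Lambda e2_Lambda, of v' e] e by simp
      next
        case F2: False
        then have sn: "s < 0" using False by simp
        define v' where "v' = (vector [- s, 1] :: real^2)"
        have me2: "- e2 \<in> Lambda q"
        proof -
          have "Sinv *v e1 = - e2" by (simp add: vec2_eq)
          then show ?thesis using Lambda_act[OF gens_in(3) e1_Lambda] by metis
        qed
        have "comb (- e2) e1 v' $1 = 1" "comb (- e2) e1 v' $2 = s" by (simp_all add: v'_def)
        moreover have "wedge (- e2) e1 = 1" by (simp add: wedge_def)
        moreover have "0 < v'$1" "0 < v'$2" using sn by (simp_all add: v'_def)
        ultimately show ?thesis using approx[OF me2 e1_Lambda, of v' e] e by simp
      qed
    qed
  qed
  then show ?thesis by blast
qed

end

theorem mainTheorem3: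
  fixes q :: nat
  assumes "q \<ge> 3"
  shows
    "(\<forall>v0\<in>Lambda q. \<forall>v1\<in>Lambda q. v0 \<noteq> v1 \<and> v0 \<noteq> - v1 \<longrightarrow> \<bar>wedge v0 v1\<bar> \<ge> 1)
   \<and> (\<forall>v u0 u1. v \<noteq> 0 \<and> (\<forall>u\<in>Lambda q. \<forall>c::real. v \<noteq> c *\<^sub>R u)
        \<and> u0 \<in> Lambda q \<and> u1 \<in> Lambda q \<and> wedge u0 u1 = 1 \<and> v \<in> open_cone u0 u1
        \<longrightarrow> (\<exists>w0 w1. grandchild q u0 u1 w0 \<and> grandchild q u0 u1 w1 \<and> wedge w0 w1 = 1
              \<and> {w0, w1} \<noteq> {u0, u1} \<and> v \<in> open_cone w0 w1))
   \<and> (\<forall>u0 u1 (w :: nat \<Rightarrow> real^2). u0 \<in> Lambda q \<and> u1 \<in> Lambda q \<and> wedge u0 u1 = 1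
        \<and> (\<forall>n\<ge>1. generated_at q u0 u1 n (w n))
        \<longrightarrow> filterlim (\<lambda>n. norm (w n)) at_top sequentially)
   \<and> closure {v$2 / v$1 | v. v \<in> Lambda q \<and> v$1 \<noteq> 0} = (UNIV :: real set)"
    by (intro conjI part1[OF assms] part2[OF assms] part3[OF assms] part4[OF assms])

end
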